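(* There does not exist any function $\Phi$ on $[0,\infty)$ with $\Phi(t)=o(t^{-3/2})$ as $t\to+\infty$ such that, for each $f^{in}\in L^2(\mathbb T^2\times\mathbb S^1)$, the solution $F$ of the Cauchy problem $$(\partial_t+\omega\cdot\nabla_x-\partial_s)F=\int_{-1}^12P(2s,h|h')F(t,x,R[\theta(h')]\omega,0,h')\,dh',\qquad F(0,x,\omega,s,h)=f^{in}(x,\omega)E(s,h)$$ satisfies, for each $t\ge0$, $$\|F(t)-\langle f^{in}\rangle E\|_{L^2(\mathbb T^2\times\mathbb S^1\times[0,\infty)\times[-1,1])}\le\Phi(t)\|F(0)\|_{L^2(\mathbb T^2\times\mathbb S^1\times[0,\infty)\times[-1,1])},$$ where $\langle\phi\rangle=\frac1{2\pi}\iint_{\mathbb T^2\times\mathbb S^1}\phi\,dx\,d\omega$.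
   Context: $\mathbb T^2=\mathbb R^2/\mathbb Z^2$. $R[\theta]$ is rotation by angle $\theta$, $\theta(h)=\pi-2\arcsin h$. $P(S,h|h')$ is defined by $$P(S,h|h')=\frac{3}{\pi^2 S\eta}\Big((S\eta)\wedge(1-S)_+ +(\eta S-|1-S|)_+ +\big((S-\tfrac12S\eta)\wedge(1+\tfrac12S\eta)-(\tfrac12S+\tfrac12S\zeta)\vee1\big)_+ +\big((S-\tfrac12S\eta)\wedge1-(\tfrac12S+\tfrac12S\zeta)\vee(1-\tfrac12S\eta)\big)_+\Big),$$ $\zeta=\tfrac12|h+h'|$, $\eta=\tfrac12|h-h'|$, $\wedge=\min$, $\vee=\max$, $z_+=\max(z,0)$; $E(s,h)=\int_{2s}^\infty\int_{-1}^1P(\tau,h|h')\,dh'\,d\tau$. The solution of the Cauchy problem is $F(t)=K_tF(0)$, where $(K_t)_{t\ge0}$ is the strongly continuous, positivity-preserving linear contraction semigroup on $L^1(\mathbb T^2\times\mathbb S^1\times[0,\infty)\times[-1,1])$ generated by the equation. *)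

theory Defs
  imports "HOL-Analysis.Analysis" "HOL-Library.Landau_Symbols"
begin

text \<open>The torus T^2 = R^2/Z^2 is represented by the fundamental cell [0,1)^2 (points of R x R),
  the circle S^1 by the angle phi in [0,2 pi) with omega = (cos phi, sin phi) and d omega = d phi.
  The rotation R[theta] acts on the angle by phi |-> phi + theta (mod 2 pi).
  A function of (t, x, omega, s, h) is a curried real function of (t, x, phi, s, h).\<close>

definition pos :: "real \<Rightarrow> real" where
  "pos z = max z 0"

definition theta :: "real \<Rightarrow> real" where
  "theta h = pi - 2 * arcsin h"

definition Pk :: "real \<Rightarrow> real \<Rightarrow> real \<Rightarrow> real" where
  "Pk S h h' =
    (let \<zeta> = \<bar>h + h'\<bar> / 2; \<eta> = \<bar>h - h'\<bar> / 2 in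
     3 / (pi^2 * S * \<eta>) *
      ( min (S * \<eta>) (pos (1 - S))
      + pos (\<eta> * S - \<bar>1 - S\<bar>)
      + pos (min (S - S * \<eta> / 2) (1 + S * \<eta> / 2) - max (S / 2 + S * \<zeta> / 2) 1)
      + pos (min (S - S * \<eta> / 2) 1 - max (S / 2 + S * \<zeta> / 2) (1 - S * \<eta> / 2))))"

definition Efun :: "real \<Rightarrow> real \<Rightarrow> real" where
  "Efun s h = set_lebesgue_integral lborel (atLeast (2 * s)) (\<lambda>\<tau>. LINT h':{-1..1}|lborel. Pk \<tau> h h')"

definition cell :: "(real \<times> real) set" where
  "cell = {0..<1} \<times> {0..<1}"

definition angn :: "real \<Rightarrow> real" where
  "angn a = a - 2 * pi * of_int \<lfloor>a / (2 * pi)\<rfloor>"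

definition tshift :: "real \<times> real \<Rightarrow> real \<Rightarrow> real \<Rightarrow> real \<times> real" where
  "tshift x \<tau> \<phi> = (frac (fst x - \<tau> * cos \<phi>), frac (snd x - \<tau> * sin \<phi>))"

definition Dom0 :: "((real \<times> real) \<times> real) set" where
  "Dom0 = cell \<times> {0..<2 * pi}"

definition Dom :: "((real \<times> real) \<times> real \<times> real \<times> real) set" where
  "Dom = cell \<times> {0..<2 * pi} \<times> atLeast 0 \<times> {-1..1}"

type_synonym state = "real \<Rightarrow> real \<times> real \<Rightarrow> real \<Rightarrow> real \<Rightarrow> real \<Rightarrow> real"

definition gain_integrand :: "state \<Rightarrow> real \<Rightarrow> real \<times> real \<Rightarrow> real \<Rightarrow> real \<Rightarrow> real \<Rightarrow> real \<Rightarrow> real" where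
  "gain_integrand F t x \<phi> s h h' = 2 * Pk (2 * s) h h' * F t x (angn (\<phi> + theta h')) 0 h'"

definition gain :: "state \<Rightarrow> real \<Rightarrow> real \<times> real \<Rightarrow> real \<Rightarrow> real \<Rightarrow> real \<Rightarrow> real" where
  "gain F t x \<phi> s h = (LINT h':{-1..1}|lborel. gain_integrand F t x \<phi> s h h')"

definition L2_data :: "(real \<times> real \<Rightarrow> real \<Rightarrow> real) \<Rightarrow> bool" where
  "L2_data f \<longleftrightarrow> (\<lambda>(x, \<phi>). f x \<phi>) \<in> borel_measurable borel
     \<and> (\<integral>\<^sup>+ u. indicator Dom0 u * ennreal ((case u of (x, \<phi>) \<Rightarrow> f x \<phi>)^2) \<partial>lborel) < \<infinity>"

text \<open>Mild (Duhamel, along characteristics) solution of the Cauchy problem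
  (d_t + omega . grad_x - d_s) F = int_{-1}^1 2 P(2s,h|h') F(t,x,R[theta(h')]omega,0,h') dh',
  F(0,x,omega,s,h) = f(x,omega) E(s,h),
  in the class of measurable functions whose trace at s = 0 is L^1 locally uniformly in t.\<close>
definition is_solution :: "(real \<times> real \<Rightarrow> real \<Rightarrow> real) \<Rightarrow> state \<Rightarrow> bool" where
  "is_solution f F \<longleftrightarrow>
     (\<lambda>(t, x, \<phi>, s, h). F t x \<phi> s h) \<in> borel_measurable borel
   \<and> (\<forall>t\<ge>0. \<forall>x\<in>cell. \<forall>\<phi>\<in>{0..<2 * pi}. \<forall>s\<ge>0. \<forall>h\<in>{-1..1}.
        set_integrable lborel {-1..1} (gain_integrand F t x \<phi> s h))
   \<and> (\<forall>t\<ge>0. \<forall>x\<in>cell. \<forall>\<phi>\<in>{0..<2 * pi}. \<forall>s\<ge>0. \<forall>h\<in>{-1..1}.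
        set_integrable lborel {0..t} (\<lambda>\<tau>. gain F (t - \<tau>) (tshift x \<tau> \<phi>) \<phi> (s + \<tau>) h)
      \<and> F t x \<phi> s h = f (tshift x t \<phi>) \<phi> * Efun (s + t) h
          + (LINT \<tau>:{0..t}|lborel. gain F (t - \<tau>) (tshift x \<tau> \<phi>) \<phi> (s + \<tau>) h))
   \<and> (\<forall>T\<ge>0. \<exists>C. \<forall>t\<in>{0..T}.
        (\<integral>\<^sup>+ u. indicator (cell \<times> {0..<2 * pi} \<times> {-1..1}) u
            * ennreal \<bar>case u of (x, \<phi>, h) \<Rightarrow> F t x \<phi> 0 h\<bar> \<partial>lborel) \<le> ennreal C)"

definition mean :: "(real \<times> real \<Rightarrow> real \<Rightarrow> real) \<Rightarrow> real" where
  "mean f = (1 / (2 * pi)) * (LINT u:Dom0|lborel. (case u of (x, \<phi>) \<Rightarrow> f x \<phi>))"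

definition L2sq :: "(real \<times> real \<Rightarrow> real \<Rightarrow> real \<Rightarrow> real \<Rightarrow> real) \<Rightarrow> ennreal" where
  "L2sq G = (\<integral>\<^sup>+ u. indicator Dom u * ennreal ((case u of (x, \<phi>, s, h) \<Rightarrow> G x \<phi> s h)^2) \<partial>lborel)"

end

theory Submission
  imports Defs
begin


lemma pos_ge0: "0 \<le> pos z" by (simp add: pos_def)
lemma pos_le: "z \<le> w \<Longrightarrow> 0 \<le> w \<Longrightarrow> pos z \<le> w" by (simp add: pos_def)
lemma pos_mono: "z \<le> w \<Longrightarrow> pos z \<le> pos w" by (simp add: pos_def)
lemma pos_zero: "z \<le> 0 \<Longrightarrow> pos z = 0" by (simp add: pos_def)

lemma pi_sq_bounds: "9 < pi^2" "pi^2 < 16"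
proof -
  have "3 < pi" "pi < 4" using pi_gt3 pi_less_4 by auto
  then show "9 < pi^2" "pi^2 < 16"
    using mult_strict_mono[of 3 pi 3 pi] mult_strict_mono[of pi 4 pi 4] by (simp_all add: power2_eq_square)
qed

lemma Pk_unfold: "Pk S h h' = 3 / (pi^2 * S * (\<bar>h - h'\<bar>/2)) *
      ( min (S * (\<bar>h - h'\<bar>/2)) (pos (1 - S))
      + pos ((\<bar>h - h'\<bar>/2) * S - \<bar>1 - S\<bar>)
      + pos (min (S - S * (\<bar>h - h'\<bar>/2) / 2) (1 + S * (\<bar>h - h'\<bar>/2) / 2) - max (S / 2 + S * (\<bar>h + h'\<bar>/2) / 2) 1)
      + pos (min (S - S * (\<bar>h - h'\<bar>/2) / 2) 1 - max (S / 2 + S * (\<bar>h + h'\<bar>/2) / 2) (1 - S * (\<bar>h - h'\<bar>/2) / 2)))"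
  by (simp add: Pk_def Let_def)

lemma Pk_generic:
  fixes S e z :: real
  assumes "0 \<le> S" "0 \<le> e"
  shows "0 \<le> min (S * e) (pos (1 - S)) \<and> min (S * e) (pos (1 - S)) \<le> S * e
   \<and> 0 \<le> pos (e * S - \<bar>1 - S\<bar>) \<and> pos (e * S - \<bar>1 - S\<bar>) \<le> S * e
   \<and> 0 \<le> pos (min (S - S * e / 2) (1 + S * e / 2) - max (S / 2 + S * z / 2) 1)
   \<and> pos (min (S - S * e / 2) (1 + S * e / 2) - max (S / 2 + S * z / 2) 1) \<le> S * e / 2
   \<and> 0 \<le> pos (min (S - S * e / 2) 1 - max (S / 2 + S * z / 2) (1 - S * e / 2))
   \<and> pos (min (S - S * e / 2) 1 - max (S / 2 + S * z / 2) (1 - S * e / 2)) \<le> S * e / 2"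
  using assms by (auto simp: pos_def min_def max_def algebra_simps)

lemma Pk_nonneg: assumes "0 \<le> S" shows "0 \<le> Pk S h h'"
proof -
  note G = Pk_generic[where S=S and e="\<bar>h - h'\<bar>/2" and z="\<bar>h + h'\<bar>/2"]
  show ?thesis unfolding Pk_unfold using G assms
    by (intro mult_nonneg_nonneg) auto
qed

lemma Pk_le1: assumes "0 \<le> S" shows "Pk S h h' \<le> 1"
proof -
  define e where "e = \<bar>h - h'\<bar>/2"
  define z where "z = \<bar>h + h'\<bar>/2"
  note G = Pk_generic[where S=S and e=e and z=z]
  have e0: "0 \<le> e" by (simp add: e_def)
  define Sm where "Sm = min (S * e) (pos (1 - S))
      + pos (e * S - \<bar>1 - S\<bar>)
      + pos (min (S - S * e / 2) (1 + S * e / 2) - max (S / 2 + S * z / 2) 1)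
      + pos (min (S - S * e / 2) 1 - max (S / 2 + S * z / 2) (1 - S * e / 2))"
  have P: "Pk S h h' = 3 / (pi^2 * S * e) * Sm"
    unfolding Pk_unfold Sm_def e_def z_def by simp
  have Sm: "0 \<le> Sm" "Sm \<le> 3 * (S * e)" using G[OF assms e0] unfolding Sm_def by linarith+
  show ?thesis
  proof (cases "S * e = 0")
    case True then show ?thesis by (auto simp add: P)
  next
    case False
    then have pos: "0 < S * e" using assms e0 by (simp add: less_le)
    have "Pk S h h' = 3 * Sm / (pi^2 * (S * e))" by (simp add: P mult.assoc)
    also have "\<dots> \<le> 3 * (3 * (S * e)) / (9 * (S * e))"
      using pi_sq_bounds pos Sm
      by (intro frac_le mult_left_mono mult_right_mono) auto
    also have "\<dots> = 1" using False by auto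
    finally show ?thesis .
  qed
qed

lemma abs_sum_diff_le2: "\<bar>h\<bar> \<le> 1 \<Longrightarrow> \<bar>h'\<bar> \<le> 1 \<Longrightarrow> \<bar>h - h'\<bar> + \<bar>h + h'\<bar> \<le> (2::real)"
  by (auto simp: abs_if)

lemma Pk_decay:
  assumes S: "4 \<le> S" and h: "\<bar>h\<bar> \<le> 1" and h': "\<bar>h'\<bar> \<le> 1"
  shows "Pk S h h' \<le> 2 / S" and "2 / S \<le> \<bar>h + h'\<bar> \<Longrightarrow> Pk S h h' = 0"
proof -
  define e where "e = \<bar>h - h'\<bar>/2"
  define z where "z = \<bar>h + h'\<bar>/2"
  have e0: "0 \<le> e" and z0: "0 \<le> z" by (auto simp: e_def z_def)
  have ez: "e + z \<le> 1" using abs_sum_diff_le2[OF h h'] by (simp add: e_def z_def)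
  define T2 where "T2 = pos (e * S - \<bar>1 - S\<bar>)"
  define T3 where "T3 = pos (min (S - S * e / 2) (1 + S * e / 2) - max (S / 2 + S * z / 2) 1)"
  have T1: "min (S * e) (pos (1 - S)) = 0" using S e0 by (simp add: pos_def)
  have T4: "pos (min (S - S * e / 2) 1 - max (S / 2 + S * z / 2) (1 - S * e / 2)) = 0"
  proof (rule pos_zero)
    have "min (S - S * e / 2) 1 \<le> 1" by simp
    moreover have "S / 2 + S * z / 2 \<le> max (S / 2 + S * z / 2) (1 - S * e / 2)" by simp
    moreover have "0 \<le> S * z" using S z0 by simp
    ultimately show "min (S - S * e / 2) 1 - max (S / 2 + S * z / 2) (1 - S * e / 2) \<le> 0"
      using S by linarith
  qed
  have P0: "Pk S h h' = 3 / (pi^2 * S * e) * (min (S * e) (pos (1 - S)) + T2 + T3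
      + pos (min (S - S * e / 2) 1 - max (S / 2 + S * z / 2) (1 - S * e / 2)))"
    unfolding Pk_unfold T2_def T3_def e_def z_def by simp
  have P: "Pk S h h' = 3 / (pi^2 * S * e) * (T2 + T3)"
    unfolding P0 T1 T4 by simp
  have T2eq: "T2 = pos (1 - S * (1 - e))" using S unfolding T2_def by (simp add: algebra_simps)
  have T3le: "T3 \<le> pos (1 - S * (1 + z - e) / 2)" unfolding T3_def
  proof (rule pos_mono)
    have "min (S - S*e/2) (1+S*e/2) \<le> 1 + S*e/2" by simp
    moreover have "S/2+S*z/2 \<le> max (S / 2 + S * z / 2) 1" by simp
    moreover have "1 - S*(1+z-e)/2 = (1 + S*e/2) - (S/2 + S*z/2)" by (simp add: field_simps)
    ultimately show "min (S - S * e / 2) (1 + S * e / 2) - max (S / 2 + S * z / 2) 1 \<le> 1 - S*(1+z-e)/2"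
      by linarith
  qed
  have Se: "0 \<le> S * (1 - e)" using S ez z0 by simp
  have Sz: "0 \<le> S * (1 + z - e)" using S ez z0 by simp
  have T2b: "0 \<le> T2" "T2 \<le> 1" using Se by (auto simp: T2eq pos_def)
  have T3b: "0 \<le> T3" "T3 \<le> 1" using T3le Sz by (auto simp: T3_def pos_def)
  have T2e: "T2 > 0 \<Longrightarrow> 1/2 \<le> e"
  proof (rule ccontr)
    assume "T2 > 0" "\<not> 1/2 \<le> e"
    then have "1/2 \<le> 1 - e" by simp
    then have "4 * (1/2) \<le> S * (1 - e)" using S by (intro mult_mono) auto
    then show False using \<open>T2 > 0\<close> by (simp add: T2eq pos_def)
  qed
  have T3e: "T3 > 0 \<Longrightarrow> 1/2 \<le> e"
  proof (rule ccontr)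
    assume "T3 > 0" "\<not> 1/2 \<le> e"
    then have "1/2 \<le> 1 + z - e" using z0 by simp
    then have "4 * (1/2) \<le> S * (1 + z - e)" using S by (intro mult_mono) auto
    then have "pos (1 - S * (1 + z - e) / 2) = 0" by (intro pos_zero) simp
    then show False using \<open>T3 > 0\<close> T3le by simp
  qed
  show "Pk S h h' \<le> 2 / S"
  proof (cases "T2 + T3 = 0")
    case True then show ?thesis using S by (simp add: P)
  next
    case False
    then have e2: "1/2 \<le> e" using T2e T3e T2b T3b by force
    have "Pk S h h' = 3 * (T2 + T3) / (pi^2 * (S * e))" by (simp add: P mult.assoc)
    also have "\<dots> \<le> 3 * 2 / (9 * (S * (1/2)))"
      using pi_sq_bounds e2 S T2b T3b
      by (intro frac_le mult_left_mono mult_mono) auto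
    also have "\<dots> \<le> 2 / S" using S by (simp add: field_simps)
    finally show ?thesis .
  qed
  assume hz: "2 / S \<le> \<bar>h + h'\<bar>"
  then have z1: "1 / S \<le> z" by (simp add: z_def)
  have "S * (1/S) \<le> S * z" using S z1 by (intro mult_left_mono) auto
  then have Sz1: "1 \<le> S * z" using S by simp
  have "S * z \<le> S * (1 - e)" using S ez by (intro mult_left_mono) auto
  then have "T2 = 0" unfolding T2eq using Sz1 by (intro pos_zero) simp
  moreover have "S * (2 * z) \<le> S * (1 + z - e)" using S ez by (intro mult_left_mono) auto
  then have "pos (1 - S * (1 + z - e) / 2) = 0" using Sz1 by (intro pos_zero) (simp add: algebra_simps)
  then have "T3 = 0" using T3le T3b by simp
  ultimately show "Pk S h h' = 0" by (simp add: P)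
qed

lemma Pk_lower:
  assumes s: "1 \<le> \<sigma>" and t: "2 * \<sigma> \<le> \<tau>" "\<tau> \<le> 4 * \<sigma>"
    and h: "1 - 1 / (16 * \<sigma>) \<le> h" "h \<le> 1" and h': "-1 \<le> h'" "h' \<le> -1 + 1 / (16 * \<sigma>)"
  shows "1 / (30 * \<sigma>) \<le> Pk \<tau> h h'"
proof -
  define e where "e = \<bar>h - h'\<bar>/2"
  define z where "z = \<bar>h + h'\<bar>/2"
  have q: "1 / (16 * \<sigma>) \<le> 1/16" using s by (simp add: field_simps)
  have eq: "e = (h - h') / 2" using h h' q unfolding e_def by (simp add: abs_if)
  have e1: "e \<le> 1" "1 - 1 / (16 * \<sigma>) \<le> e" using h h' unfolding eq by auto
  have es: "0 < e" using e1 q by linarith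
  note G = Pk_generic[where S=\<tau> and e=e and z=z]
  have tau0: "0 \<le> \<tau>" using s t by simp
  define Sm where "Sm = min (\<tau> * e) (pos (1 - \<tau>))
      + pos (e * \<tau> - \<bar>1 - \<tau>\<bar>)
      + pos (min (\<tau> - \<tau> * e / 2) (1 + \<tau> * e / 2) - max (\<tau> / 2 + \<tau> * z / 2) 1)
      + pos (min (\<tau> - \<tau> * e / 2) 1 - max (\<tau> / 2 + \<tau> * z / 2) (1 - \<tau> * e / 2))"
  have P: "Pk \<tau> h h' = 3 / (pi^2 * \<tau> * e) * Sm"
    unfolding Pk_unfold Sm_def e_def z_def by simp
  have "\<tau> * (1 - e) \<le> (4 * \<sigma>) * (1 / (16 * \<sigma>))"
    using e1 t tau0 by (intro mult_mono) auto
  also have "\<dots> = 1/4" using s by simp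
  finally have "3/4 \<le> e * \<tau> - \<bar>1 - \<tau>\<bar>" using t s by (simp add: algebra_simps)
  then have "3/4 \<le> pos (e * \<tau> - \<bar>1 - \<tau>\<bar>)" by (simp add: pos_def)
  then have Sm: "3/4 \<le> Sm" using G[OF tau0 less_imp_le[OF es]] unfolding Sm_def by linarith
  have te: "0 < \<tau> * e" using es s t by simp
  have "3 * (3/4) / (16 * (4 * \<sigma> * 1)) \<le> 3 * Sm / (pi^2 * (\<tau> * e))"
    using pi_sq_bounds Sm te t e1 s es
    by (intro frac_le mult_left_mono mult_mono) auto
  also have "\<dots> = Pk \<tau> h h'" by (simp add: P mult.assoc)
  finally have "9 / (256 * \<sigma>) \<le> Pk \<tau> h h'" by simp
  moreover have "1 / (30 * \<sigma>) \<le> 9 / (256 * \<sigma>)" using s by (simp add: field_simps)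
  ultimately show ?thesis by linarith
qed



lemma Pk_meas[measurable (raw)]:
  assumes [measurable]: "f \<in> borel_measurable M" "g \<in> borel_measurable M" "k \<in> borel_measurable M"
  shows "(\<lambda>x. Pk (f x) (g x) (k x)) \<in> borel_measurable M"
  unfolding Pk_def pos_def Let_def by measurable

definition thetac :: "real \<Rightarrow> real" where "thetac h = theta (max (-1) (min 1 h))"

lemma thetac_eq: "h \<in> {-1..1} \<Longrightarrow> thetac h = theta h"
  by (simp add: thetac_def)

lemma thetac_cont: "continuous_on UNIV thetac"
  unfolding thetac_def theta_def
  by (intro continuous_intros) auto

lemma thetac_meas[measurable]: "thetac \<in> borel_measurable borel"
  using thetac_cont borel_measurable_continuous_onI by blast

lemma angn_meas[measurable]: "angn \<in> borel_measurable borel"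
  unfolding angn_def by measurable

lemma test: "(\<lambda>(S::real,h::real,h'::real). Pk S h h' * angn (h + thetac h')) \<in> borel_measurable borel"
  unfolding borel_prod[symmetric] by measurable


lemma ind_atLeast: "indicator {a..} x = (if a \<le> x then 1 else (0::real))" by (simp add: indicator_def)
lemma ind_Icc: "indicator {a..b} x = (if a \<le> x \<and> x \<le> b then 1 else (0::real))" by (simp add: indicator_def)

lemma Efun_meas[measurable (raw)]:
  assumes [measurable]: "f \<in> borel_measurable M" "g \<in> borel_measurable M"
  shows "(\<lambda>x. Efun (f x) (g x)) \<in> borel_measurable M"
proof -
  have "(\<lambda>(s,h). Efun s h) \<in> borel_measurable (borel \<Otimes>\<^sub>M borel)"
    unfolding Efun_def set_lebesgue_integral_def ind_atLeast ind_Icc by measurable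
  from measurable_compose[OF measurable_Pair[OF assms] this] show ?thesis by simp
qed

lemma integral_const_ind: "(l::real) \<le> u \<Longrightarrow> (\<integral>x. indicator {l..u} x * (c::real) \<partial>lborel) = c * (u - l)"
  by (simp add: integral_mult_left_zero mult.commute)

lemma integrable_const_ind[simp]: "integrable lborel (\<lambda>x. indicator {l..u::real} x * (c::real))"
  by (rule integrable_mult_left, rule integrable_real_indicator) (auto simp: emeasure_lborel_Icc_eq)

definition Iint :: "real \<Rightarrow> real \<Rightarrow> real" where
  "Iint \<tau> h = (LINT h':{-1..1}|lborel. Pk \<tau> h h')"

lemma Efun_Iint: "Efun s h = set_lebesgue_integral lborel (atLeast (2 * s)) (\<lambda>\<tau>. Iint \<tau> h)"
  unfolding Efun_def Iint_def ..

lemma Iint_meas[measurable (raw)]: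
  assumes [measurable]: "f \<in> borel_measurable M" "g \<in> borel_measurable M"
  shows "(\<lambda>x. Iint (f x) (g x)) \<in> borel_measurable M"
proof -
  have "(\<lambda>(s,h). Iint s h) \<in> borel_measurable (borel \<Otimes>\<^sub>M borel)"
    unfolding Iint_def set_lebesgue_integral_def ind_Icc by measurable
  from measurable_compose[OF measurable_Pair[OF assms] this] show ?thesis by simp
qed

lemma Pk_int: "0 \<le> \<tau> \<Longrightarrow> integrable lborel (\<lambda>h'. indicator {-1..1} h' * Pk \<tau> h h')"
  using integrableI_bounded_set_indicator[where M=lborel and A="{-1..1}" and B=1
      and f="\<lambda>h'. Pk \<tau> h h'"] Pk_nonneg Pk_le1
  by (auto simp: emeasure_lborel_Icc_eq)

lemma Iint_eq: "Iint \<tau> h = (\<integral>h'. indicator {-1..1} h' * Pk \<tau> h h' \<partial>lborel)"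
  unfolding Iint_def set_lebesgue_integral_def by simp

lemma Iint_nonneg: "0 \<le> \<tau> \<Longrightarrow> 0 \<le> Iint \<tau> h"
  unfolding Iint_eq by (intro Bochner_Integration.integral_nonneg) (auto simp: Pk_nonneg indicator_def)

lemma Iint_le2: "0 \<le> \<tau> \<Longrightarrow> Iint \<tau> h \<le> 2"
proof -
  assume t: "0 \<le> \<tau>"
  have "Iint \<tau> h \<le> (\<integral>h'. indicator {-1..1::real} h' * 1 \<partial>lborel)"
    unfolding Iint_eq
    by (rule Bochner_Integration.integral_mono[OF Pk_int[OF t] integrable_const_ind])
       (auto simp: indicator_def Pk_le1[OF t])
  also have "\<dots> = 2" by (subst integral_const_ind) auto
  finally show ?thesis .
qed

lemma Iint_decay: assumes t: "4 \<le> \<tau>" and h: "\<bar>h\<bar> \<le> 1" shows "Iint \<tau> h \<le> 8 / \<tau>^2"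
proof -
  have "Iint \<tau> h \<le> (\<integral>h'. indicator {-h - 2/\<tau> .. -h + 2/\<tau>} h' * (2/\<tau>) \<partial>lborel)"
    unfolding Iint_eq
  proof (intro Bochner_Integration.integral_mono Pk_int integrable_const_ind)
    fix h' :: real
    show "indicator {-1..1} h' * Pk \<tau> h h' \<le> indicator {-h - 2/\<tau> .. -h + 2/\<tau>} h' * (2/\<tau>)"
    proof (cases "h' \<in> {-1..1}")
      case False then show ?thesis using t by (auto simp: indicator_def)
    next
      case True
      then have h': "\<bar>h'\<bar> \<le> 1" by auto
      show ?thesis
      proof (cases "2 / \<tau> \<le> \<bar>h + h'\<bar>")
        case True then show ?thesis using Pk_decay(2)[OF t h h'] t by (simp add: indicator_def)
      next
        case False
        then have "h' \<in> {-h - 2/\<tau> .. -h + 2/\<tau>}" by auto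
        then show ?thesis using Pk_decay(1)[OF t h h'] \<open>h' \<in> {-1..1}\<close> by simp
      qed
    qed
  qed (use t in auto)
  also have "\<dots> = 8 / \<tau>^2" using t by (subst integral_const_ind) (auto simp: power2_eq_square field_simps)
  finally show ?thesis .
qed

definition Mj :: "real \<Rightarrow> real" where "Mj \<tau> = 128 / (\<tau> + 4)^2"

lemma Iint_Mj: assumes t: "0 \<le> \<tau>" and h: "\<bar>h\<bar> \<le> 1" shows "Iint \<tau> h \<le> Mj \<tau>"
proof (cases "\<tau> \<le> 4")
  case True
  have "(\<tau> + 4)^2 \<le> 8^2" using True t by (intro power_mono) auto
  then have "2 \<le> Mj \<tau>" unfolding Mj_def using t by (simp add: field_simps)
  then show ?thesis using Iint_le2[OF t, of h] by linarith
next
  case False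
  have "(\<tau> + 4)^2 \<le> (2*\<tau>)^2" using False by (intro power_mono) auto
  then have "8 / \<tau>^2 \<le> Mj \<tau>" unfolding Mj_def using False
    by (simp add: field_simps power2_eq_square)
  then show ?thesis using Iint_decay[of \<tau> h] False h by linarith
qed

lemma Iint_lower:
  assumes s: "1 \<le> \<sigma>" and t: "2 * \<sigma> \<le> \<tau>" "\<tau> \<le> 4 * \<sigma>"
    and h: "1 - 1 / (16 * \<sigma>) \<le> h" "h \<le> 1"
  shows "1 / (480 * \<sigma>^2) \<le> Iint \<tau> h"
proof -
  have q: "1 / (16 * \<sigma>) \<le> 2" using s by (simp add: field_simps)
  have "(\<integral>h'. indicator {-1 .. -1 + 1/(16*\<sigma>)} h' * (1 / (30 * \<sigma>)) \<partial>lborel) \<le> Iint \<tau> h"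
    unfolding Iint_eq
  proof (intro Bochner_Integration.integral_mono Pk_int integrable_const_ind)
    fix h' :: real
    show "indicator {-1 .. -1 + 1/(16*\<sigma>)} h' * (1 / (30 * \<sigma>)) \<le> indicator {-1..1} h' * Pk \<tau> h h'"
      using Pk_lower[OF s t h, of h'] q Pk_nonneg[of \<tau> h h'] s t by (auto simp: indicator_def)
  qed (use s t in auto)
  moreover have "(\<integral>h'. indicator {-1 .. -1 + 1/(16*\<sigma>)} h' * (1 / (30 * \<sigma>)) \<partial>lborel) = 1 / (480 * \<sigma>^2)"
    using s by (subst integral_const_ind) (auto simp: power2_eq_square)
  ultimately show ?thesis by simp
qed

lemma Mj_meas[measurable]: "Mj \<in> borel_measurable borel"
  unfolding Mj_def by measurable

lemma Mj_nonneg: "0 \<le> Mj x" unfolding Mj_def by simp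

lemma Mj_nn: assumes a: "0 \<le> a"
  shows "(\<integral>\<^sup>+x. ennreal (Mj x) * indicator {a..} x \<partial>lborel) = ennreal (128 / (a + 4))"
proof -
  have "(\<integral>\<^sup>+x. ennreal (Mj x) * indicator {a..} x \<partial>lborel) = 0 - (- 128 / (a + 4))"
  proof (rule nn_integral_FTC_atLeast)
    show "Mj \<in> borel_measurable borel" by measurable
    fix x assume x: "a \<le> x"
    then have "x + 4 \<noteq> 0" using a by simp
    then show "((\<lambda>x. - 128 / (x + 4)) has_real_derivative Mj x) (at x)"
      unfolding Mj_def by (auto intro!: derivative_eq_intros simp: power2_eq_square field_simps)
    show "0 \<le> Mj x" by (rule Mj_nonneg)
  next
    have lim: "LIM x at_top. (x::real) + 4 :> at_top"
      using filterlim_tendsto_add_at_top[OF tendsto_const[of 4] filterlim_ident] by (simp add: add.commute)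
    have "((\<lambda>x::real. 128 / (x + 4)) \<longlongrightarrow> 0) at_top"
      by (intro tendsto_divide_0[OF tendsto_const] filterlim_at_top_imp_at_infinity lim)
    then show "((\<lambda>x::real. - 128 / (x + 4)) \<longlongrightarrow> 0) at_top"
      using tendsto_minus by fastforce
  qed
  then show ?thesis by simp
qed

lemma Mj_hasint: assumes a: "0 \<le> a"
  shows "has_bochner_integral lborel (\<lambda>x. indicator {a..} x * Mj x) (128 / (a + 4))"
proof (rule has_bochner_integral_nn_integral)
  show "(\<lambda>x. indicator {a..} x * Mj x) \<in> borel_measurable lborel" by measurable
  show "AE x in lborel. 0 \<le> indicator {a..} x * Mj x" by (simp add: Mj_nonneg)
  show "0 \<le> 128 / (a + 4)" using a by simp
  have "(\<integral>\<^sup>+x. ennreal (indicator {a..} x * Mj x) \<partial>lborel) = (\<integral>\<^sup>+x. ennreal (Mj x) * indicator {a..} x \<partial>lborel)"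
    by (intro nn_integral_cong) (simp add: indicator_def)
  then show "(\<integral>\<^sup>+x. ennreal (indicator {a..} x * Mj x) \<partial>lborel) = ennreal (128 / (a + 4))"
    using Mj_nn[OF a] by simp
qed

lemma Mj_int: "0 \<le> a \<Longrightarrow> integrable lborel (\<lambda>x. indicator {a..} x * Mj x)"
  using Mj_hasint integrable.intros by blast

lemma Efun_eq: "Efun s h = (\<integral>\<tau>. indicator {2 * s..} \<tau> * Iint \<tau> h \<partial>lborel)"
  unfolding Efun_Iint set_lebesgue_integral_def by simp

lemma Iint_E_int: assumes s: "0 \<le> s" and h: "\<bar>h\<bar> \<le> 1"
  shows "integrable lborel (\<lambda>\<tau>. indicator {2 * s..} \<tau> * Iint \<tau> h)"
proof (rule Bochner_Integration.integrable_bound)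
  show "integrable lborel (\<lambda>x. indicator {2 * s..} x * Mj x)"
    using Mj_int[of "2 * s"] s by simp
  show "(\<lambda>\<tau>. indicator {2 * s..} \<tau> * Iint \<tau> h) \<in> borel_measurable lborel" by measurable
  show "AE x in lborel. norm (indicator {2 * s..} x * Iint x h) \<le> norm (indicator {2 * s..} x * Mj x)"
    using s Iint_Mj[OF _ h] Iint_nonneg Mj_nonneg by (auto simp: indicator_def)
qed

lemma Efun_bounds: assumes s: "0 \<le> s" and h: "\<bar>h\<bar> \<le> 1"
  shows "0 \<le> Efun s h" "Efun s h \<le> 128 / (2 * s + 4)" "Efun s h \<le> 32"
proof -
  show "0 \<le> Efun s h" unfolding Efun_eq
    using s Iint_nonneg by (intro Bochner_Integration.integral_nonneg) (auto simp: indicator_def)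
  have "Efun s h \<le> (\<integral>x. indicator {2 * s..} x * Mj x \<partial>lborel)"
    unfolding Efun_eq
    using s Iint_Mj[OF _ h]
    by (intro Bochner_Integration.integral_mono Iint_E_int s h Mj_int)
       (auto simp: indicator_def)
  also have "\<dots> = 128 / (2 * s + 4)"
    using Mj_hasint[of "2 * s"] s by (simp add: has_bochner_integral_iff)
  finally show "Efun s h \<le> 128 / (2 * s + 4)" .
  also have "\<dots> \<le> 32" using s by (simp add: field_simps)
  finally show "Efun s h \<le> 32" .
qed

lemma Efun_lower: assumes s: "1 \<le> \<sigma>" and h: "1 - 1 / (16 * \<sigma>) \<le> h" "h \<le> 1"
  shows "1 / (240 * \<sigma>) \<le> Efun \<sigma> h"
proof -
  have q: "1 / (16 * \<sigma>) \<le> 2" using s by (simp add: field_simps)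
  have habs: "\<bar>h\<bar> \<le> 1" using h q by auto
  have "(\<integral>x. indicator {2 * \<sigma> .. 4 * \<sigma>} x * (1 / (480 * \<sigma>^2)) \<partial>lborel) \<le> Efun \<sigma> h"
    unfolding Efun_eq
  proof (intro Bochner_Integration.integral_mono Iint_E_int integrable_const_ind habs)
    fix x :: real
    show "indicator {2 * \<sigma> .. 4 * \<sigma>} x * (1 / (480 * \<sigma>^2)) \<le> indicator {2 * \<sigma>..} x * Iint x h"
      using Iint_lower[OF s _ _ h, of x] Iint_nonneg[of x h] s by (auto simp: indicator_def)
  qed (use s in auto)
  moreover have "(\<integral>x. indicator {2 * \<sigma> .. 4 * \<sigma>} x * (1 / (480 * \<sigma>^2)) \<partial>lborel) = 1 / (240 * \<sigma>)"
    using s by (subst integral_const_ind) (auto simp: power2_eq_square field_simps)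
  ultimately show ?thesis by simp
qed



definition clamp :: "real \<Rightarrow> real" where "clamp h = max (-1) (min 1 h)"

lemma clamp_id: "\<bar>h\<bar> \<le> 1 \<Longrightarrow> clamp h = h" by (auto simp: clamp_def)
lemma clamp_abs: "\<bar>clamp h\<bar> \<le> 1" by (auto simp: clamp_def)
lemma clamp_meas[measurable]: "clamp \<in> borel_measurable borel" unfolding clamp_def by measurable

definition meas3 :: "(real \<Rightarrow> real \<Rightarrow> real \<Rightarrow> real) \<Rightarrow> bool" where
  "meas3 w \<longleftrightarrow> (\<lambda>(t,\<phi>,h). w t \<phi> h) \<in> borel_measurable borel"

lemma meas3_comp:
  assumes "meas3 w" "a \<in> borel_measurable M" "b \<in> borel_measurable M" "c \<in> borel_measurable M"
  shows "(\<lambda>x. w (a x) (b x) (c x)) \<in> borel_measurable M"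
proof -
  have w: "(\<lambda>(t,\<phi>,h). w t \<phi> h) \<in> borel_measurable (borel \<Otimes>\<^sub>M borel \<Otimes>\<^sub>M borel)"
    using assms(1) unfolding meas3_def borel_prod .
  have "(\<lambda>x. (a x, b x, c x)) \<in> M \<rightarrow>\<^sub>M borel \<Otimes>\<^sub>M borel \<Otimes>\<^sub>M borel"
    using assms(2-4) by measurable
  from measurable_compose[OF this w] show ?thesis by simp
qed

definition innr :: "(real \<Rightarrow> real \<Rightarrow> real \<Rightarrow> real) \<Rightarrow> real \<Rightarrow> real \<Rightarrow> real \<Rightarrow> real \<Rightarrow> real" where
  "innr w r \<phi> S h = (LINT h':{-1..1}|lborel. 2 * Pk S h h' * w r (angn (\<phi> + thetac h')) h')"

definition Kops :: "(real \<Rightarrow> real \<Rightarrow> real \<Rightarrow> real) \<Rightarrow> real \<Rightarrow> real \<Rightarrow> real \<Rightarrow> real \<Rightarrow> real" where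
  "Kops w t \<phi> s h = (LINT \<tau>:{0..t}|lborel. innr w (t - \<tau>) \<phi> (2 * (s + \<tau>)) h)"

lemma innr_meas:
  assumes "meas3 w"
  shows "(\<lambda>(r,\<phi>,S,h). innr w r \<phi> S h) \<in> borel_measurable borel"
proof -
  note wc[measurable (raw)] = meas3_comp[OF assms]
  show ?thesis
    unfolding innr_def set_lebesgue_integral_def ind_Icc borel_prod[symmetric] by measurable
qed

lemma meas4_comp:
  fixes g :: "real \<Rightarrow> real \<Rightarrow> real \<Rightarrow> real \<Rightarrow> real"
  assumes "(\<lambda>(r,\<phi>,S,h). g r \<phi> S h) \<in> borel_measurable borel"
    "a \<in> borel_measurable M" "b \<in> borel_measurable M" "c \<in> borel_measurable M" "d \<in> borel_measurable M"
  shows "(\<lambda>x. g (a x) (b x) (c x) (d x)) \<in> borel_measurable M"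
proof -
  have w: "(\<lambda>(r,\<phi>,S,h). g r \<phi> S h) \<in> borel_measurable (borel \<Otimes>\<^sub>M borel \<Otimes>\<^sub>M borel \<Otimes>\<^sub>M borel)"
    using assms(1) by (simp add: borel_prod)
  have "(\<lambda>x. (a x, b x, c x, d x)) \<in> M \<rightarrow>\<^sub>M borel \<Otimes>\<^sub>M borel \<Otimes>\<^sub>M borel \<Otimes>\<^sub>M borel"
    using assms(2-5) by measurable
  from measurable_compose[OF this w] show ?thesis by simp
qed

lemma Kops_meas:
  assumes "meas3 w"
  shows "(\<lambda>(t,\<phi>,s,h). Kops w t \<phi> s h) \<in> borel_measurable borel"
proof -
  note ic[measurable (raw)] = meas4_comp[OF innr_meas[OF assms]]
  show ?thesis
    unfolding Kops_def set_lebesgue_integral_def ind_Icc borel_prod[symmetric] by measurable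
qed

lemma integrableI_ind_real:
  "A \<in> sets M \<Longrightarrow> f \<in> borel_measurable M \<Longrightarrow> emeasure M A < \<infinity> \<Longrightarrow>
   (AE x in M. x \<in> A \<longrightarrow> \<bar>f x\<bar> \<le> B) \<Longrightarrow> integrable M (\<lambda>x. indicator A x * (f x::real))"
  using integrableI_bounded_set_indicator[of A M f B] by simp

lemma innr_integrand_meas:
  assumes "meas3 w"
  shows "(\<lambda>h'. indicator {-1..1} h' * (2 * Pk S h h' * w r (angn (\<phi> + thetac h')) h')) \<in> borel_measurable lborel"
proof -
  note wc[measurable (raw)] = meas3_comp[OF assms]
  show ?thesis unfolding ind_Icc by measurable
qed

lemma innr_eq: "innr w r \<phi> S h = (\<integral>h'. indicator {-1..1} h' * (2 * Pk S h h' * w r (angn (\<phi> + thetac h')) h') \<partial>lborel)"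
  unfolding innr_def set_lebesgue_integral_def by simp

lemma innr_int:
  assumes w: "meas3 w" and S: "0 \<le> S" and B: "\<And>\<psi> h'. \<bar>h'\<bar> \<le> 1 \<Longrightarrow> \<bar>w r \<psi> h'\<bar> \<le> B"
  shows "integrable lborel (\<lambda>h'. indicator {-1..1} h' * (2 * Pk S h h' * w r (angn (\<phi> + thetac h')) h'))"
    and "\<bar>innr w r \<phi> S h\<bar> \<le> 4 * B"
proof -
  have pb: "\<bar>2 * Pk S h h' * w r (angn (\<phi> + thetac h')) h'\<bar> \<le> 2 * B" if "\<bar>h'\<bar> \<le> 1" for h'
  proof -
    have "\<bar>2 * Pk S h h' * w r (angn (\<phi> + thetac h')) h'\<bar> = 2 * Pk S h h' * \<bar>w r (angn (\<phi> + thetac h')) h'\<bar>"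
      using Pk_nonneg[OF S] by (simp add: abs_mult)
    also have "\<dots> \<le> 2 * 1 * B"
      using Pk_nonneg[OF S, of h h'] Pk_le1[OF S, of h h'] B[OF that] 
      by (intro mult_mono) auto
    finally show ?thesis by simp
  qed
  note wc[measurable (raw)] = meas3_comp[OF w]
  have m: "(\<lambda>h'. 2 * Pk S h h' * w r (angn (\<phi> + thetac h')) h') \<in> borel_measurable lborel"
    by measurable
  show int: "integrable lborel (\<lambda>h'. indicator {-1..1} h' * (2 * Pk S h h' * w r (angn (\<phi> + thetac h')) h'))"
  proof (rule integrableI_ind_real[where M=lborel and A="{-1..1}" and B="2 * B", OF _ m])
    show "AE x in lborel. x \<in> {-1..1} \<longrightarrow> abs (2 * Pk S h x * w r (angn (\<phi> + thetac x)) x) \<le> 2 * B"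
      by (intro AE_I2) (auto intro: pb)
  qed (auto simp: emeasure_lborel_Icc_eq)
  have "\<bar>innr w r \<phi> S h\<bar> \<le> (\<integral>h'. indicator {-1..1::real} h' * (2 * B) \<partial>lborel)"
    unfolding innr_eq
    by (rule integral_abs_bound_integral[OF int integrable_const_ind]) (auto simp: indicator_def pb)
  also have "\<dots> = 4 * B" by (subst integral_const_ind) auto
  finally show "\<bar>innr w r \<phi> S h\<bar> \<le> 4 * B" .
qed

lemma innr_nonneg:
  assumes S: "0 \<le> S" and B: "\<And>\<psi> h'. \<bar>h'\<bar> \<le> 1 \<Longrightarrow> 0 \<le> w r \<psi> h'"
  shows "0 \<le> innr w r \<phi> S h"
  unfolding innr_eq using Pk_nonneg[OF S] B
  by (intro Bochner_Integration.integral_nonneg) (auto simp: indicator_def)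

lemma Kops_eq: "Kops w t \<phi> s h = (\<integral>\<tau>. indicator {0..t} \<tau> * innr w (t - \<tau>) \<phi> (2 * (s + \<tau>)) h \<partial>lborel)"
  unfolding Kops_def set_lebesgue_integral_def by simp

lemma Kops_neg: "t < 0 \<Longrightarrow> Kops w t \<phi> s h = 0"
  unfolding Kops_eq by simp

lemma Kops_integrand_meas:
  assumes "meas3 w"
  shows "(\<lambda>\<tau>. indicator {0..t} \<tau> * innr w (t - \<tau>) \<phi> (2 * (s + \<tau>)) h) \<in> borel_measurable lborel"
proof -
  note ic[measurable (raw)] = meas4_comp[OF innr_meas[OF assms]]
  show ?thesis unfolding ind_Icc by measurable
qed

lemma FTC_pow:
  assumes t: "0 \<le> t"
  shows "has_bochner_integral lborel (\<lambda>\<tau>. (c * (t - \<tau>)^n) * indicator {0..t} \<tau>) (c * t^(Suc n) / Suc n)"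
proof -
  have "has_bochner_integral lborel (\<lambda>\<tau>. (c * (t - \<tau>)^n) * indicator {0..t} \<tau>)
      ((\<lambda>\<tau>. - c * (t - \<tau>)^(Suc n) / Suc n) t - (\<lambda>\<tau>. - c * (t - \<tau>)^(Suc n) / Suc n) 0)"
  proof (rule has_bochner_integral_FTC_Icc_real[OF t])
    fix x :: real
    show "((\<lambda>\<tau>. - c * (t - \<tau>)^(Suc n) / Suc n) has_real_derivative c * (t - x) ^ n) (at x)"
      by (auto intro!: derivative_eq_intros simp del: of_nat_Suc power_Suc)
    show "isCont (\<lambda>\<tau>. c * (t - \<tau>) ^ n) x" by (intro continuous_intros)
  qed
  then show ?thesis by simp
qed

lemma Kops_bound:
  assumes t: "0 \<le> t" and s: "0 \<le> s" and w: "meas3 w" and c: "0 \<le> c"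
    and B: "\<And>r \<psi> h'. 0 \<le> r \<Longrightarrow> r \<le> t \<Longrightarrow> \<bar>h'\<bar> \<le> 1 \<Longrightarrow> \<bar>w r \<psi> h'\<bar> \<le> c * r^n"
  shows "integrable lborel (\<lambda>\<tau>. indicator {0..t} \<tau> * innr w (t - \<tau>) \<phi> (2 * (s + \<tau>)) h)"
    and "\<bar>Kops w t \<phi> s h\<bar> \<le> 4 * c * t^(Suc n) / Suc n"
proof -
  have ib: "\<bar>indicator {0..t} \<tau> * innr w (t - \<tau>) \<phi> (2 * (s + \<tau>)) h\<bar> \<le> (4 * c * (t - \<tau>)^n) * indicator {0..t} \<tau>" for \<tau>
  proof (cases "\<tau> \<in> {0..t}")
    case True
    then have "\<bar>innr w (t - \<tau>) \<phi> (2 * (s + \<tau>)) h\<bar> \<le> 4 * (c * (t - \<tau>)^n)"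
      using s by (intro innr_int(2)[OF w] B) auto
    then show ?thesis using True by simp
  qed simp
  have M: "has_bochner_integral lborel (\<lambda>\<tau>. (4 * c * (t - \<tau>)^n) * indicator {0..t} \<tau>) (4 * c * t^(Suc n) / Suc n)"
    using FTC_pow[OF t, of "4 * c" n] by simp
  have Mi: "integrable lborel (\<lambda>\<tau>. (4 * c * (t - \<tau>)^n) * indicator {0..t} \<tau>)"
    using M integrable.intros by blast
  show int: "integrable lborel (\<lambda>\<tau>. indicator {0..t} \<tau> * innr w (t - \<tau>) \<phi> (2 * (s + \<tau>)) h)"
  proof (rule Bochner_Integration.integrable_bound[OF Mi Kops_integrand_meas[OF w]])
    show "AE x in lborel. norm (indicator {0..t} x * innr w (t - x) \<phi> (2 * (s + x)) h)
        \<le> norm (4 * c * (t - x) ^ n * indicator {0..t} x)"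
    proof (rule AE_I2)
      fix x show "norm (indicator {0..t} x * innr w (t - x) \<phi> (2 * (s + x)) h)
        \<le> norm (4 * c * (t - x) ^ n * indicator {0..t} x)"
        using ib[of x] abs_ge_self[of "4 * c * (t - x) ^ n * indicator {0..t} x"]
        unfolding real_norm_def by linarith
    qed
  qed
  have "\<bar>Kops w t \<phi> s h\<bar> \<le> (\<integral>\<tau>. (4 * c * (t - \<tau>)^n) * indicator {0..t} \<tau> \<partial>lborel)"
    unfolding Kops_eq by (rule integral_abs_bound_integral[OF int Mi]) (use ib in auto)
  also have "\<dots> = 4 * c * t^(Suc n) / Suc n" using M by (simp add: has_bochner_integral_iff)
  finally show "\<bar>Kops w t \<phi> s h\<bar> \<le> 4 * c * t^(Suc n) / Suc n" .
qed

lemma Kops_nonneg: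
  assumes s: "0 \<le> s" and B: "\<And>r \<psi> h'. 0 \<le> r \<Longrightarrow> r \<le> t \<Longrightarrow> \<bar>h'\<bar> \<le> 1 \<Longrightarrow> 0 \<le> w r \<psi> h'"
  shows "0 \<le> Kops w t \<phi> s h"
  unfolding Kops_eq using s B
  by (intro Bochner_Integration.integral_nonneg)
     (auto simp: indicator_def intro!: innr_nonneg)

lemma summable_bound:
  fixes f :: "nat \<Rightarrow> real"
  assumes "summable b" "\<And>n. \<bar>f n\<bar> \<le> c * b n"
  shows "summable f" "summable (\<lambda>n. \<bar>f n\<bar>)"
proof -
  have g: "summable (\<lambda>n. c * b n)" using assms(1) by (rule summable_mult)
  show "summable f" by (rule summable_comparison_test'[OF g, where N=0]) (use assms(2) in simp)
  show "summable (\<lambda>n. \<bar>f n\<bar>)" by (rule summable_comparison_test'[OF g, where N=0]) (use assms(2) in simp)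
qed

lemma innr_suminf:
  assumes S: "0 \<le> S" and w: "\<And>n. meas3 (w n)"
    and B: "\<And>n \<psi> h'. \<bar>h'\<bar> \<le> 1 \<Longrightarrow> \<bar>w n r \<psi> h'\<bar> \<le> b n" and b: "summable b"
  shows "innr (\<lambda>r \<psi> h'. \<Sum>n. w n r \<psi> h') r \<phi> S h = (\<Sum>n. innr (w n) r \<phi> S h)"
proof -
  define f where "f n h' = indicator {-1..1} h' * (2 * Pk S h h' * w n r (angn (\<phi> + thetac h')) h')" for n h'
  have pt: "indicator {-1..1} h' * (2 * Pk S h h' * (\<Sum>n. w n r (angn (\<phi> + thetac h')) h')) = (\<Sum>n. f n h')" for h'
  proof (cases "h' \<in> {-1..1}")
    case True
    have "summable (\<lambda>n. w n r (angn (\<phi> + thetac h')) h')"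
    proof (rule summable_bound(1)[OF b, where c=1])
      fix n show "\<bar>w n r (angn (\<phi> + thetac h')) h'\<bar> \<le> 1 * b n"
        using B[where n=n and h'=h' and \<psi>="angn (\<phi> + thetac h')"] True by (simp add: abs_le_iff)
    qed
    then show ?thesis using True unfolding f_def by (simp add: suminf_mult)
  qed (simp add: f_def)
  have fint: "integrable lborel (f n)" for n
    unfolding f_def using innr_int(1)[OF w S B] .
  have fb: "\<bar>f n h'\<bar> \<le> 2 * b n" for n h'
  proof (cases "h' \<in> {-1..1}")
    case True
    have "\<bar>f n h'\<bar> = 2 * Pk S h h' * \<bar>w n r (angn (\<phi> + thetac h')) h'\<bar>"
      using True Pk_nonneg[OF S] by (simp add: f_def abs_mult)
    also have "\<dots> \<le> 2 * 1 * b n" using True Pk_nonneg[OF S, of h h'] Pk_le1[OF S, of h h'] B[of h' n]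
      by (intro mult_mono) auto
    finally show ?thesis by simp
  next
    case False
    have "\<bar>w n r 0 0\<bar> \<le> b n" by (rule B) simp
    then have "0 \<le> b n" by linarith
    then show ?thesis using False by (simp add: f_def)
  qed
  have fb2: "(\<integral>x. norm (f n x) \<partial>lborel) \<le> 4 * b n" for n
  proof -
    have "(\<integral>x. norm (f n x) \<partial>lborel) \<le> (\<integral>x. indicator {-1..1::real} x * (2 * b n) \<partial>lborel)"
    proof (rule Bochner_Integration.integral_mono[OF integrable_norm[OF fint] integrable_const_ind])
      fix x :: real show "norm (f n x) \<le> indicator {-1..1} x * (2 * b n)"
        using fb[of n x] by (cases "x \<in> {-1..1}") (auto simp: f_def)
    qed
    also have "\<dots> = 4 * b n" by (subst integral_const_ind) auto
    finally show ?thesis .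
  qed
  have "innr (\<lambda>r \<psi> h'. \<Sum>n. w n r \<psi> h') r \<phi> S h = (\<integral>x. (\<Sum>n. f n x) \<partial>lborel)"
    unfolding innr_eq pt ..
  also have "\<dots> = (\<Sum>n. integral\<^sup>L lborel (f n))"
  proof (rule integral_suminf[OF fint])
    show "AE x in lborel. summable (\<lambda>i. norm (f i x))"
      using summable_bound(2)[OF b fb] by simp
    show "summable (\<lambda>i. \<integral>x. norm (f i x) \<partial>lborel)"
      by (rule summable_bound(1)[OF b, where c=4]) (use fb2 in auto)
  qed
  also have "\<dots> = (\<Sum>n. innr (w n) r \<phi> S h)" unfolding innr_eq f_def ..
  finally show ?thesis .
qed

lemma Kops_suminf:
  assumes t: "0 \<le> t" and s: "0 \<le> s" and w: "\<And>n. meas3 (w n)"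
    and B: "\<And>n r \<psi> h'. 0 \<le> r \<Longrightarrow> r \<le> t \<Longrightarrow> \<bar>h'\<bar> \<le> 1 \<Longrightarrow> \<bar>w n r \<psi> h'\<bar> \<le> b n"
    and b: "summable b"
  shows "Kops (\<lambda>r \<psi> h'. \<Sum>n. w n r \<psi> h') t \<phi> s h = (\<Sum>n. Kops (w n) t \<phi> s h)"
proof -
  define g where "g n \<tau> = indicator {0..t} \<tau> * innr (w n) (t - \<tau>) \<phi> (2 * (s + \<tau>)) h" for n \<tau>
  have b0: "0 \<le> b n" for n
  proof -
    have "\<bar>w n 0 0 0\<bar> \<le> b n" by (rule B) (use t in auto)
    then show ?thesis by linarith
  qed
  have pt: "indicator {0..t} \<tau> * innr (\<lambda>r \<psi> h'. \<Sum>n. w n r \<psi> h') (t - \<tau>) \<phi> (2 * (s + \<tau>)) h = (\<Sum>n. g n \<tau>)" for \<tau>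
  proof (cases "\<tau> \<in> {0..t}")
    case True
    have "innr (\<lambda>r \<psi> h'. \<Sum>n. w n r \<psi> h') (t - \<tau>) \<phi> (2 * (s + \<tau>)) h = (\<Sum>n. innr (w n) (t - \<tau>) \<phi> (2 * (s + \<tau>)) h)"
      using True s by (intro innr_suminf[OF _ w _ b] B) auto
    then show ?thesis using True by (simp add: g_def)
  qed (simp add: g_def)
  have gint: "integrable lborel (g n)" for n
    unfolding g_def by (rule Kops_bound(1)[OF t s w[of n] b0[of n], where n=0]) (use B in simp)
  have gb: "\<bar>g n \<tau>\<bar> \<le> 4 * b n" for n \<tau>
  proof (cases "\<tau> \<in> {0..t}")
    case True
    then have "\<bar>innr (w n) (t - \<tau>) \<phi> (2 * (s + \<tau>)) h\<bar> \<le> 4 * b n"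
      using s by (intro innr_int(2)[OF w] B) auto
    then show ?thesis using True by (simp add: g_def)
  qed (simp add: g_def b0)
  have gb2: "(\<integral>x. norm (g n x) \<partial>lborel) \<le> t * (4 * b n)" for n
  proof -
    have "(\<integral>x. norm (g n x) \<partial>lborel) \<le> (\<integral>x. indicator {0..t} x * (4 * b n) \<partial>lborel)"
    proof (rule Bochner_Integration.integral_mono[OF integrable_norm[OF gint] integrable_const_ind])
      fix x :: real show "norm (g n x) \<le> indicator {0..t} x * (4 * b n)"
        using gb[of n x] by (cases "x \<in> {0..t}") (auto simp: g_def)
    qed
    also have "\<dots> = t * (4 * b n)" using t by (subst integral_const_ind) auto
    finally show ?thesis .
  qed
  have "Kops (\<lambda>r \<psi> h'. \<Sum>n. w n r \<psi> h') t \<phi> s h = (\<integral>x. (\<Sum>n. g n x) \<partial>lborel)"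
    unfolding Kops_eq pt ..
  also have "\<dots> = (\<Sum>n. integral\<^sup>L lborel (g n))"
  proof (rule integral_suminf[OF gint])
    show "AE x in lborel. summable (\<lambda>i. norm (g i x))"
      using summable_bound(2)[OF b gb] by simp
    show "summable (\<lambda>i. \<integral>x. norm (g i x) \<partial>lborel)"
      by (rule summable_bound(1)[OF b, where c="4 * t"]) (use gb2 in \<open>auto simp: algebra_simps\<close>)
  qed
  also have "\<dots> = (\<Sum>n. Kops (w n) t \<phi> s h)" unfolding Kops_eq g_def ..
  finally show ?thesis .
qed



definition good :: "(real \<Rightarrow> real) \<Rightarrow> bool" where
  "good f0 \<longleftrightarrow> f0 \<in> borel_measurable borel \<and> (\<forall>\<phi>. 0 \<le> f0 \<phi> \<and> f0 \<phi> \<le> 1)"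

primrec uu :: "(real \<Rightarrow> real) \<Rightarrow> nat \<Rightarrow> real \<Rightarrow> real \<Rightarrow> real \<Rightarrow> real" where
  "uu f0 0 = (\<lambda>t \<phi> h. f0 \<phi> * Efun (max t 0) (clamp h))"
| "uu f0 (Suc n) = (\<lambda>t \<phi> h. Kops (uu f0 n) t \<phi> 0 h)"

lemma uu_meas: assumes g: "good f0" shows "meas3 (uu f0 n)"
proof (induction n)
  case 0
  have [measurable]: "f0 \<in> borel_measurable borel" using g by (simp add: good_def)
  show ?case unfolding meas3_def uu.simps borel_prod[symmetric] by measurable
next
  case (Suc n)
  note kc[measurable (raw)] = meas4_comp[OF Kops_meas[OF Suc.IH]]
  show ?case unfolding meas3_def uu.simps borel_prod[symmetric] by measurable
qed

definition bb :: "real \<Rightarrow> nat \<Rightarrow> real" where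
  "bb T n = 32 * 4^n * T^n / fact n"

lemma bb_summable: "summable (bb T)"
proof -
  have eq: "bb T = (\<lambda>n. 32 * (inverse (fact n) * (4 * T)^n))"
    by (auto simp: bb_def fun_eq_iff field_simps power_mult_distrib)
  show ?thesis unfolding eq by (intro summable_mult summable_exp)
qed

lemma bb_mono: "0 \<le> r \<Longrightarrow> r \<le> T \<Longrightarrow> bb r n \<le> bb T n"
  unfolding bb_def by (intro divide_right_mono mult_left_mono power_mono) auto

lemma bb_nonneg: "0 \<le> T \<Longrightarrow> 0 \<le> bb T n"
  unfolding bb_def by simp

lemma uu_bound: assumes g: "good f0" shows "\<bar>uu f0 n t \<phi> h\<bar> \<le> bb (max t 0) n"
proof (induction n arbitrary: t \<phi> h)
  case 0
  have f: "0 \<le> f0 \<phi>" "f0 \<phi> \<le> 1" using g by (auto simp: good_def)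
  have E: "0 \<le> Efun (max t 0) (clamp h)" "Efun (max t 0) (clamp h) \<le> 32"
    using Efun_bounds[of "max t 0" "clamp h"] clamp_abs by auto
  have "\<bar>uu f0 0 t \<phi> h\<bar> = f0 \<phi> * Efun (max t 0) (clamp h)" using f E by simp
  also have "\<dots> \<le> 1 * 32" using f E by (intro mult_mono) auto
  finally show ?case by (simp add: bb_def)
next
  case (Suc n)
  show ?case
  proof (cases "t < 0")
    case True then show ?thesis by (simp add: Kops_neg bb_def)
  next
    case False
    then have t: "0 \<le> t" by simp
    have "\<bar>Kops (uu f0 n) t \<phi> 0 h\<bar> \<le> 4 * (32 * 4^n / fact n) * t^(Suc n) / Suc n"
    proof (rule Kops_bound(2)[OF t _ uu_meas[OF g]])
      fix r \<psi> h' :: real assume r: "0 \<le> r" "r \<le> t"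
      show "\<bar>uu f0 n r \<psi> h'\<bar> \<le> 32 * 4^n / fact n * r^n"
        using Suc.IH[of r \<psi> h'] r by (simp add: bb_def)
    qed auto
    also have "\<dots> = bb (max t 0) (Suc n)" using t by (simp add: bb_def field_simps)
    finally show ?thesis by simp
  qed
qed

lemma uu_nonneg: assumes g: "good f0" shows "0 \<le> uu f0 n t \<phi> h"
proof (induction n arbitrary: t \<phi> h)
  case 0
  have f: "0 \<le> f0 \<phi>" using g by (auto simp: good_def)
  have E: "0 \<le> Efun (max t 0) (clamp h)"
    using Efun_bounds[of "max t 0" "clamp h"] clamp_abs by auto
  show ?case using f E by simp
next
  case (Suc n)
  show ?case using Suc.IH by (simp add: Kops_nonneg)
qed

definition UU :: "(real \<Rightarrow> real) \<Rightarrow> real \<Rightarrow> real \<Rightarrow> real \<Rightarrow> real" where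
  "UU f0 t \<phi> h = (\<Sum>n. uu f0 n t \<phi> h)"

lemma uu_summable: "good f0 \<Longrightarrow> summable (\<lambda>n. uu f0 n t \<phi> h)"
  by (rule summable_bound(1)[OF bb_summable[of "max t 0"], where c=1]) (use uu_bound in simp)

lemma UU_meas: assumes g: "good f0" shows "meas3 (UU f0)"
proof -
  have "(\<lambda>x. \<Sum>n. (case x of (t, \<phi>, h) \<Rightarrow> uu f0 n t \<phi> h)) \<in> borel_measurable borel"
    using uu_meas[OF g] unfolding meas3_def by measurable
  then show ?thesis unfolding meas3_def UU_def by (simp add: case_prod_beta')
qed

lemma UU_nonneg: "good f0 \<Longrightarrow> 0 \<le> UU f0 t \<phi> h"
  unfolding UU_def by (intro suminf_nonneg uu_summable uu_nonneg)

lemma UU_bound: assumes g: "good f0" and t: "0 \<le> t" "t \<le> T"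
  shows "\<bar>UU f0 t \<phi> h\<bar> \<le> (\<Sum>n. bb T n)"
proof -
  have "UU f0 t \<phi> h \<le> (\<Sum>n. bb T n)" unfolding UU_def
  proof (rule suminf_le[OF _ uu_summable[OF g] bb_summable])
    fix n show "uu f0 n t \<phi> h \<le> bb T n"
      using uu_bound[OF g, of n t \<phi> h] bb_mono[of t T n] t by auto
  qed
  then show ?thesis using UU_nonneg[OF g] by simp
qed

lemma UU_fix: assumes g: "good f0" and t: "0 \<le> t" and h: "\<bar>h\<bar> \<le> 1"
  shows "UU f0 t \<phi> h = f0 \<phi> * Efun t h + Kops (UU f0) t \<phi> 0 h"
proof -
  have s: "summable (\<lambda>n. uu f0 n t \<phi> h)" by (rule uu_summable[OF g])
  have "UU f0 t \<phi> h = uu f0 0 t \<phi> h + (\<Sum>n. uu f0 (Suc n) t \<phi> h)"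
    unfolding UU_def using suminf_split_head[OF s] by simp
  also have "(\<Sum>n. uu f0 (Suc n) t \<phi> h) = (\<Sum>n. Kops (uu f0 n) t \<phi> 0 h)" by simp
  also have "\<dots> = Kops (\<lambda>r \<psi> h'. \<Sum>n. uu f0 n r \<psi> h') t \<phi> 0 h"
  proof (rule Kops_suminf[symmetric, OF t _ uu_meas[OF g] _ bb_summable])
    fix n and r \<psi> h' :: real assume r: "0 \<le> r" "r \<le> t"
    show "\<bar>uu f0 n r \<psi> h'\<bar> \<le> bb t n"
      using uu_bound[OF g, of n r \<psi> h'] bb_mono[of r t n] r by auto
  qed simp
  also have "(\<lambda>r \<psi> h'. \<Sum>n. uu f0 n r \<psi> h') = UU f0" by (simp add: UU_def fun_eq_iff)
  finally show ?thesis using t h by (simp add: clamp_id)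
qed

definition FF :: "(real \<Rightarrow> real) \<Rightarrow> real \<Rightarrow> real \<times> real \<Rightarrow> real \<Rightarrow> real \<Rightarrow> real \<Rightarrow> real" where
  "FF f0 t x \<phi> s h = f0 \<phi> * Efun (s + t) h + Kops (UU f0) t \<phi> s h"

lemma FF_trace: "good f0 \<Longrightarrow> 0 \<le> t \<Longrightarrow> \<bar>h\<bar> \<le> 1 \<Longrightarrow> FF f0 t x \<phi> 0 h = UU f0 t \<phi> h"
  unfolding FF_def using UU_fix by simp



lemma FF_meas: assumes g: "good f0"
  shows "(\<lambda>(t, x, \<phi>, s, h). FF f0 t x \<phi> s h) \<in> borel_measurable borel"
proof -
  have [measurable]: "f0 \<in> borel_measurable borel" using g by (simp add: good_def)
  note kc[measurable (raw)] = meas4_comp[OF Kops_meas[OF UU_meas[OF g]]]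
  show ?thesis unfolding FF_def borel_prod[symmetric] by measurable
qed

lemma gi_eq:
  assumes g: "good f0" and t: "0 \<le> t"
  shows "indicator {-1..1} h' * gain_integrand (FF f0) t x \<phi> s h h'
       = indicator {-1..1} h' * (2 * Pk (2 * s) h h' * UU f0 t (angn (\<phi> + thetac h')) h')"
proof (cases "h' \<in> {-1..1}")
  case True
  then have "\<bar>h'\<bar> \<le> 1" by auto
  then show ?thesis using True unfolding gain_integrand_def
    by (simp add: FF_trace[OF g t] thetac_eq)
qed simp

lemma gain_eq:
  assumes g: "good f0" and t: "0 \<le> t"
  shows "gain (FF f0) t y \<phi> s h = innr (UU f0) t \<phi> (2 * s) h"
  unfolding gain_def set_lebesgue_integral_def innr_eq
  by (intro Bochner_Integration.integral_cong) (use gi_eq[OF g t] in auto)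

lemma gain_int:
  assumes g: "good f0" and t: "0 \<le> t" and s: "0 \<le> s"
  shows "set_integrable lborel {-1..1} (gain_integrand (FF f0) t x \<phi> s h)"
proof -
  have "integrable lborel (\<lambda>h'. indicator {-1..1} h' * (2 * Pk (2 * s) h h' * UU f0 t (angn (\<phi> + thetac h')) h'))"
    using s by (intro innr_int(1)[OF UU_meas[OF g], where B="\<Sum>n. bb t n"] UU_bound[OF g t order_refl]) auto
  moreover have "(\<lambda>h'. indicator {-1..1} h' *\<^sub>R gain_integrand (FF f0) t x \<phi> s h h')
     = (\<lambda>h'. indicator {-1..1} h' * (2 * Pk (2 * s) h h' * UU f0 t (angn (\<phi> + thetac h')) h'))"
    by (rule ext) (simp add: gi_eq[OF g t])
  ultimately show ?thesis unfolding set_integrable_def by simp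
qed

lemma Kops_UU_int:
  assumes g: "good f0" and t: "0 \<le> t" and s: "0 \<le> s"
  shows "integrable lborel (\<lambda>\<tau>. indicator {0..t} \<tau> * innr (UU f0) (t - \<tau>) \<phi> (2 * (s + \<tau>)) h)"
proof (rule Kops_bound(1)[OF t s UU_meas[OF g], where n=0 and c="\<Sum>n. bb t n"])
  show "0 \<le> (\<Sum>n. bb t n)" using bb_nonneg t by (intro suminf_nonneg bb_summable) auto
  fix r \<psi> h' :: real assume "0 \<le> r" "r \<le> t"
  then show "\<bar>UU f0 r \<psi> h'\<bar> \<le> (\<Sum>n. bb t n) * r ^ 0" using UU_bound[OF g] by simp
qed

lemma duh_eq:
  assumes g: "good f0"
  shows "indicator {0..t} \<tau> * gain (FF f0) (t - \<tau>) (tshift x \<tau> \<phi>) \<phi> (s + \<tau>) h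
       = indicator {0..t} \<tau> * innr (UU f0) (t - \<tau>) \<phi> (2 * (s + \<tau>)) h"
proof (cases "\<tau> \<in> {0..t}")
  case True
  then have "0 \<le> t - \<tau>" by auto
  then show ?thesis using gain_eq[OF g] by simp
qed simp

lemma cell_sets[measurable]: "cell \<in> sets borel"
  unfolding cell_def borel_prod[symmetric] by (intro pair_measureI) auto

lemma trace_set_sets: "cell \<times> {0..<2 * pi} \<times> {-1..1::real} \<in> sets lborel"
  unfolding sets_lborel borel_prod[symmetric] cell_def by (intro pair_measureI) auto

lemma bounded_Ico: "bounded {a..<b::real}"
  by (rule bounded_subset[OF bounded_closed_interval[of a b]]) auto

lemma trace_set_bounded: "bounded (cell \<times> {0..<2 * pi} \<times> {-1..1::real})"
  unfolding cell_def by (intro bounded_Times bounded_Ico bounded_closed_interval)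

lemma FF_solution: assumes g: "good f0"
  shows "is_solution (\<lambda>x \<phi>. f0 \<phi>) (FF f0)"
  unfolding is_solution_def
proof (intro conjI allI impI ballI)
  show "(\<lambda>(t, x, \<phi>, s, h). FF f0 t x \<phi> s h) \<in> borel_measurable borel" by (rule FF_meas[OF g])
next
  fix t s :: real and x :: "real \<times> real" and \<phi> h
  assume t: "0 \<le> t" and s: "0 \<le> s"
  show "set_integrable lborel {-1..1} (gain_integrand (FF f0) t x \<phi> s h)"
    by (rule gain_int[OF g t s])
  have eq: "(\<lambda>\<tau>. indicator {0..t} \<tau> *\<^sub>R gain (FF f0) (t - \<tau>) (tshift x \<tau> \<phi>) \<phi> (s + \<tau>) h)
     = (\<lambda>\<tau>. indicator {0..t} \<tau> * innr (UU f0) (t - \<tau>) \<phi> (2 * (s + \<tau>)) h)"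
    using duh_eq[OF g] by (simp add: fun_eq_iff)
  show "set_integrable lborel {0..t} (\<lambda>\<tau>. gain (FF f0) (t - \<tau>) (tshift x \<tau> \<phi>) \<phi> (s + \<tau>) h)"
    unfolding set_integrable_def eq by (rule Kops_UU_int[OF g t s])
  show "FF f0 t x \<phi> s h = f0 \<phi> * Efun (s + t) h
          + (LINT \<tau>:{0..t}|lborel. gain (FF f0) (t - \<tau>) (tshift x \<tau> \<phi>) \<phi> (s + \<tau>) h)"
    unfolding FF_def set_lebesgue_integral_def eq Kops_eq ..
next
  fix T :: real assume T: "0 \<le> T"
  define A where "A = cell \<times> {0..<2 * pi} \<times> {-1..1::real}"
  define K where "K = (\<Sum>n. bb T n)"
  have K0: "0 \<le> K" unfolding K_def using bb_nonneg T by (intro suminf_nonneg bb_summable) auto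
  have fin: "emeasure lborel A < \<infinity>" unfolding A_def by (rule emeasure_bounded_finite[OF trace_set_bounded])
  have Aset: "A \<in> sets lborel" unfolding A_def by (rule trace_set_sets)
  show "\<exists>C. \<forall>t\<in>{0..T}. (\<integral>\<^sup>+ u. indicator (cell \<times> {0..<2 * pi} \<times> {-1..1}) u
            * ennreal \<bar>case u of (x, \<phi>, h) \<Rightarrow> FF f0 t x \<phi> 0 h\<bar> \<partial>lborel) \<le> ennreal C"
  proof (intro exI ballI)
    fix t assume t: "t \<in> {0..T}"
    have "(\<integral>\<^sup>+ u. indicator A u * ennreal \<bar>case u of (x, \<phi>, h) \<Rightarrow> FF f0 t x \<phi> 0 h\<bar> \<partial>lborel)
        \<le> (\<integral>\<^sup>+ u. ennreal K * indicator A u \<partial>lborel)"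
    proof (rule nn_integral_mono)
      fix u :: "(real \<times> real) \<times> real \<times> real"
      obtain x \<phi> h where u: "u = (x, \<phi>, h)" by (cases u) auto
      show "indicator A u * ennreal \<bar>case u of (x, \<phi>, h) \<Rightarrow> FF f0 t x \<phi> 0 h\<bar> \<le> ennreal K * indicator A u"
      proof (cases "u \<in> A")
        case True
        then have "\<bar>h\<bar> \<le> 1" unfolding A_def u by auto
        then have "\<bar>FF f0 t x \<phi> 0 h\<bar> \<le> K" unfolding K_def using t
          by (simp add: FF_trace[OF g] UU_bound[OF g])
        then show ?thesis using True u by (simp add: ennreal_leI)
      qed simp
    qed
    also have "\<dots> = ennreal K * emeasure lborel A" using Aset by (rule nn_integral_cmult_indicator)
    also have "\<dots> = ennreal (K * measure lborel A)"
      using fin K0 by (simp add: emeasure_eq_ennreal_measure ennreal_mult)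
    finally show "(\<integral>\<^sup>+ u. indicator (cell \<times> {0..<2 * pi} \<times> {-1..1}) u
            * ennreal \<bar>case u of (x, \<phi>, h) \<Rightarrow> FF f0 t x \<phi> 0 h\<bar> \<partial>lborel) \<le> ennreal (K * measure lborel A)"
      unfolding A_def .
  qed
qed



lemma nn_split:
  fixes f :: "'a::euclidean_space \<Rightarrow> ennreal" and g :: "'b::euclidean_space \<Rightarrow> ennreal"
  assumes [measurable]: "f \<in> borel_measurable borel" "g \<in> borel_measurable borel"
  shows "(\<integral>\<^sup>+u. f (fst u) * g (snd u) \<partial>lborel) = (\<integral>\<^sup>+x. f x \<partial>lborel) * (\<integral>\<^sup>+y. g y \<partial>lborel)"
proof -
  have m: "(\<lambda>u. f (fst u) * g (snd u)) \<in> borel_measurable (lborel \<Otimes>\<^sub>M lborel)" by measurable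
  have "(\<integral>\<^sup>+u. f (fst u) * g (snd u) \<partial>lborel) = (\<integral>\<^sup>+u. f (fst u) * g (snd u) \<partial>(lborel \<Otimes>\<^sub>M lborel))"
    by (simp add: lborel_prod)
  also have "\<dots> = (\<integral>\<^sup>+x. \<integral>\<^sup>+y. f x * g y \<partial>lborel \<partial>lborel)"
    using lborel.nn_integral_fst[OF m] by simp
  also have "\<dots> = (\<integral>\<^sup>+x. f x * (\<integral>\<^sup>+y. g y \<partial>lborel) \<partial>lborel)"
    by (simp add: nn_integral_cmult)
  also have "\<dots> = (\<integral>\<^sup>+x. f x \<partial>lborel) * (\<integral>\<^sup>+y. g y \<partial>lborel)"
    by (simp add: nn_integral_multc)
  finally show ?thesis .
qed

lemma emeasure_Times_lborel:
  fixes A :: "'a::euclidean_space set" and B :: "'b::euclidean_space set"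
  assumes [measurable]: "A \<in> sets borel" "B \<in> sets borel"
  shows "emeasure lborel (A \<times> B) = emeasure lborel A * emeasure lborel B"
proof -
  have [measurable]: "A \<times> B \<in> sets borel" unfolding borel_prod[symmetric] by (intro pair_measureI) auto
  have "emeasure lborel (A \<times> B) = (\<integral>\<^sup>+u. indicator (A \<times> B) u \<partial>lborel)"
    by simp
  also have "\<dots> = (\<integral>\<^sup>+u. indicator A (fst u) * indicator B (snd u) \<partial>lborel)"
    by (intro nn_integral_cong) (auto simp: indicator_def)
  also have "\<dots> = emeasure lborel A * emeasure lborel B"
    by (subst nn_split) auto
  finally show ?thesis .
qed

lemma emeasure_cell: "emeasure lborel cell = 1"
  unfolding cell_def by (subst emeasure_Times_lborel) auto

definition f0d :: "real \<Rightarrow> real \<Rightarrow> real" where "f0d \<delta> \<phi> = indicator {0..<\<delta>} \<phi>"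

lemma good_f0d: "good (f0d \<delta>)"
  unfolding good_def f0d_def by (auto simp: indicator_def)

lemma Kops_zero: "Kops w 0 \<phi> s h = 0"
proof -
  show ?thesis
    unfolding Kops_eq
    by (rule integral_eq_zero_AE, rule eventually_mono[OF AE_lborel_singleton[of 0]]) (auto simp: indicator_def)
qed

lemma FF_zero: "FF f0 0 x \<phi> s h = f0 \<phi> * Efun s h"
  unfolding FF_def Kops_zero by simp



lemma times_sets:
  fixes A :: "'a::euclidean_space set" and B :: "'b::euclidean_space set"
  shows "A \<in> sets borel \<Longrightarrow> B \<in> sets borel \<Longrightarrow> A \<times> B \<in> sets borel"
  unfolding borel_prod[symmetric] by (intro pair_measureI) auto

lemma Dom0_sets: "Dom0 \<in> sets borel"
  unfolding Dom0_def by (intro times_sets cell_sets) auto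

lemma Dom0_bounded: "bounded Dom0"
  unfolding Dom0_def cell_def by (intro bounded_Times bounded_Ico)

lemma L2_f0d: "L2_data (\<lambda>x \<phi>. f0d \<delta> \<phi>)"
  unfolding L2_data_def
proof
  have m: "(\<lambda>u. indicator {0..<\<delta>} (snd u) :: real) \<in> borel_measurable (borel \<Otimes>\<^sub>M borel :: ((real \<times> real) \<times> real) measure)"
    by measurable
  show "(\<lambda>(x::real\<times>real, \<phi>). f0d \<delta> \<phi>) \<in> borel_measurable borel"
    using m by (simp add: borel_prod f0d_def case_prod_beta')
  have "(\<integral>\<^sup>+ u. indicator Dom0 u * ennreal ((case u of (x::real\<times>real, \<phi>) \<Rightarrow> f0d \<delta> \<phi>)^2) \<partial>lborel)
      \<le> (\<integral>\<^sup>+ u. indicator Dom0 u \<partial>lborel)"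
    by (intro nn_integral_mono) (auto simp: f0d_def indicator_def)
  also have "\<dots> = emeasure lborel Dom0" using Dom0_sets by simp
  also have "\<dots> < \<infinity>" by (rule emeasure_bounded_finite[OF Dom0_bounded])
  finally show "(\<integral>\<^sup>+ u. indicator Dom0 u * ennreal ((case u of (x::real\<times>real, \<phi>) \<Rightarrow> f0d \<delta> \<phi>)^2) \<partial>lborel) < \<infinity>" .
qed

lemma mean_f0d: assumes d: "0 < \<delta>" "\<delta> \<le> 2 * pi"
  shows "mean (\<lambda>x \<phi>. f0d \<delta> \<phi>) = \<delta> / (2 * pi)"
proof -
  have cs: "cell \<times> {0..<\<delta>} \<in> sets borel" by (intro times_sets cell_sets) auto
  have em: "emeasure lborel (cell \<times> {0..<\<delta>}) = ennreal \<delta>"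
    using d by (subst emeasure_Times_lborel) (auto simp: emeasure_cell)
  have "(LINT u:Dom0|lborel. (case u of (x, \<phi>) \<Rightarrow> f0d \<delta> \<phi>)) = (\<integral>u. indicator (cell \<times> {0..<\<delta>}) u \<partial>lborel)"
    unfolding set_lebesgue_integral_def using d
    by (intro Bochner_Integration.integral_cong) (auto simp: Dom0_def f0d_def indicator_def)
  also have "\<dots> = measure lborel (cell \<times> {0..<\<delta>})" by simp
  also have "\<dots> = \<delta>" using em d by (simp add: measure_def)
  finally show ?thesis unfolding mean_def by simp
qed

definition Gs :: "real \<Rightarrow> real" where "Gs s = 4096 / (s + 2)^2"

lemma Gs_nn: "(\<integral>\<^sup>+x. ennreal (Gs x) * indicator {0..} x \<partial>lborel) = ennreal 2048"
proof -
  have "(\<integral>\<^sup>+x. ennreal (Gs x) * indicator {0..} x \<partial>lborel) = ennreal (0 - (- 4096 / ((0::real) + 2)))"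
  proof (rule nn_integral_FTC_atLeast)
    show "Gs \<in> borel_measurable borel" unfolding Gs_def by measurable
    fix x :: real assume x: "0 \<le> x"
    then have "x + 2 \<noteq> 0" by simp
    then show "((\<lambda>x. - 4096 / (x + 2)) has_real_derivative Gs x) (at x)"
      unfolding Gs_def by (auto intro!: derivative_eq_intros simp: power2_eq_square field_simps)
    show "0 \<le> Gs x" unfolding Gs_def by simp
  next
    have lim: "LIM x at_top. (x::real) + 2 :> at_top"
      using filterlim_tendsto_add_at_top[OF tendsto_const[of 2] filterlim_ident] by (simp add: add.commute)
    have "((\<lambda>x::real. 4096 / (x + 2)) \<longlongrightarrow> 0) at_top"
      by (intro tendsto_divide_0[OF tendsto_const] filterlim_at_top_imp_at_infinity lim)
    then show "((\<lambda>x::real. - 4096 / (x + 2)) \<longlongrightarrow> 0) at_top"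
      using tendsto_minus by fastforce
  qed
  then show ?thesis by simp
qed

lemma Efun_sq: assumes s: "0 \<le> s" and h: "\<bar>h\<bar> \<le> 1" shows "(Efun s h)^2 \<le> Gs s"
proof -
  have eq: "128 / (2 * s + 4) = 64 / (s + 2)" using s by (simp add: field_simps)
  have "Efun s h \<le> 64 / (s + 2)" using Efun_bounds(2)[OF s h] unfolding eq .
  then have "(Efun s h)^2 \<le> (64 / (s + 2))^2" using Efun_bounds(1)[OF s h] by (intro power_mono) auto
  then show ?thesis by (simp add: Gs_def power_divide)
qed

lemma F0_bound: assumes d: "0 < \<delta>" "\<delta> \<le> 2 * pi"
  shows "L2sq (FF (f0d \<delta>) 0) \<le> ennreal (4096 * \<delta>)"
proof -
  define k :: "real \<times> real \<Rightarrow> ennreal" where "k sh = ennreal (Gs (fst sh)) * indicator {0..} (fst sh) * indicator {-1..1} (snd sh)" for sh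
  define g :: "real \<times> real \<times> real \<Rightarrow> ennreal" where "g v = indicator {0..<\<delta>} (fst v) * k (snd v)" for v
  have km[measurable]: "k \<in> borel_measurable (borel \<Otimes>\<^sub>M borel)" unfolding k_def Gs_def by measurable
  have gm0: "g \<in> borel_measurable (borel \<Otimes>\<^sub>M (borel \<Otimes>\<^sub>M borel))" unfolding g_def by measurable
  have gm[measurable]: "g \<in> borel_measurable borel" using gm0 by (simp add: borel_prod)
  have km2[measurable]: "k \<in> borel_measurable borel" using km by (simp add: borel_prod)
  have "L2sq (FF (f0d \<delta>) 0) \<le> (\<integral>\<^sup>+ u. indicator cell (fst u) * g (snd u) \<partial>lborel)"
    unfolding L2sq_def
  proof (rule nn_integral_mono)
    fix u :: "(real \<times> real) \<times> real \<times> real \<times> real"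
    obtain x \<phi> s h where u: "u = (x, \<phi>, s, h)" by (cases u) auto
    show "indicator Dom u * ennreal ((case u of (x, \<phi>, s, h) \<Rightarrow> FF (f0d \<delta>) 0 x \<phi> s h)^2)
        \<le> indicator cell (fst u) * g (snd u)"
    proof (cases "u \<in> Dom")
      case True
      then have s: "0 \<le> s" and h: "\<bar>h\<bar> \<le> 1" and x: "x \<in> cell" unfolding Dom_def u by auto
      have "(FF (f0d \<delta>) 0 x \<phi> s h)^2 \<le> indicator {0..<\<delta>} \<phi> * Gs s"
        unfolding FF_zero f0d_def using Efun_sq[OF s h] by (auto simp: indicator_def power_mult_distrib)
      then have "ennreal ((FF (f0d \<delta>) 0 x \<phi> s h)^2) \<le> ennreal (indicator {0..<\<delta>} \<phi> * Gs s)"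
        by (rule ennreal_leI)
      also have "\<dots> = g (\<phi>, s, h)" unfolding g_def k_def using s h
        by (auto simp: indicator_def)
      finally show ?thesis using True x u by simp
    qed (simp add: u)
  qed
  also have "\<dots> = emeasure lborel cell * (\<integral>\<^sup>+ v. g v \<partial>lborel)"
    by (subst nn_split) (auto simp: cell_sets)
  also have "(\<integral>\<^sup>+ v. g v \<partial>lborel) = emeasure lborel {0..<\<delta>} * (\<integral>\<^sup>+ sh. k sh \<partial>lborel)"
    unfolding g_def by (subst nn_split) auto
  also have "(\<integral>\<^sup>+ sh. k sh \<partial>lborel) = (\<integral>\<^sup>+ s. ennreal (Gs s) * indicator {0..} s \<partial>lborel) * emeasure lborel {-1..1::real}"
    unfolding k_def by (subst nn_split) (auto simp: Gs_def)
  also have "\<dots> = ennreal (2048 * 2)" by (simp add: Gs_nn ennreal_mult)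
  finally have "L2sq (FF (f0d \<delta>) 0) \<le> ennreal \<delta> * ennreal 4096"
    using d by (simp add: emeasure_cell ennreal_mult[symmetric])
  also have "\<dots> = ennreal (4096 * \<delta>)"
    using ennreal_mult[of 4096 \<delta>] d by (simp add: mult.commute)
  finally show ?thesis .
qed



lemma LHS_bound:
  assumes t: "1 \<le> t" and dd: "\<delta> = 1 / (16000 * t)"
  shows "ennreal ((1 / (960 * t))^2 * (\<delta> / 32))
     \<le> L2sq (\<lambda>x \<phi> s h. FF (f0d \<delta>) t x \<phi> s h - mean (\<lambda>x \<phi>. f0d \<delta> \<phi>) * Efun s h)"
proof -
  have d0: "0 < \<delta>" using t dd by simp
  have d2: "\<delta> \<le> 2 * pi"
  proof -
    have "\<delta> \<le> 1" unfolding dd using t by (auto simp: divide_le_eq)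
    then show ?thesis using pi_gt3 by linarith
  qed
  define m where "m = mean (\<lambda>x \<phi>. f0d \<delta> \<phi>)"
  have m: "m = \<delta> / (2 * pi)" unfolding m_def by (rule mean_f0d[OF d0 d2])
  have m32: "m * 32 \<le> 1 / (3000 * t)"
  proof -
    have "m * 32 = 1 / (1000 * pi * t)" unfolding m dd by (simp add: field_simps)
    also have "\<dots> \<le> 1 / (1000 * 3 * t)" using pi_gt3 t
      by (intro divide_left_mono mult_mono mult_pos_pos) auto
    finally show ?thesis by simp
  qed
  have m0: "0 \<le> m" unfolding m using d0 by simp
  define c where "c = 1 / (960 * t)"
  have c0: "0 \<le> c" unfolding c_def using t by simp
  define R where "R = cell \<times> {0..<\<delta>} \<times> {0..t} \<times> {1 - 1 / (32 * t)..1}"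
  have q: "1 / (32 * t) \<le> 1/32" using t by (simp add: field_simps)
  have Rs: "R \<in> sets borel" unfolding R_def by (intro times_sets cell_sets) auto
  have Rm: "emeasure lborel R = ennreal (\<delta> / 32)"
  proof -
    have a: "ennreal t * ennreal (1 / (32 * t)) = ennreal (t * (1 / (32 * t)))"
      by (rule ennreal_mult[symmetric]) (use t in auto)
    have a2: "t * (1 / (32 * t)) = 1 / 32" using t by simp
    have b: "ennreal \<delta> * ennreal (1 / 32) = ennreal (\<delta> * (1 / 32))"
      by (rule ennreal_mult[symmetric]) (use d0 in auto)
    have "emeasure lborel R = emeasure lborel cell * (emeasure lborel {0..<\<delta>} * (emeasure lborel {0..t} * emeasure lborel {1 - 1 / (32 * t)..1}))"
      unfolding R_def by (simp add: emeasure_Times_lborel times_sets cell_sets)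
    also have "\<dots> = ennreal \<delta> * (ennreal t * ennreal (1 / (32 * t)))"
      using d0 t q by (simp add: emeasure_cell)
    also have "\<dots> = ennreal (\<delta> / 32)" unfolding a a2 b by simp
    finally show ?thesis .
  qed
  have g: "good (f0d \<delta>)" by (rule good_f0d)
  have pt: "ennreal (c^2) * indicator R u
      \<le> indicator Dom u * ennreal ((case u of (x, \<phi>, s, h) \<Rightarrow> FF (f0d \<delta>) t x \<phi> s h - m * Efun s h)^2)" for u
  proof -
    obtain x \<phi> s h where u: "u = (x, \<phi>, s, h)" by (cases u) auto
    show ?thesis
    proof (cases "u \<in> R")
      case True
      then have x: "x \<in> cell" and ph: "0 \<le> \<phi>" "\<phi> < \<delta>" and s: "0 \<le> s" "s \<le> t"
        and h: "1 - 1 / (32 * t) \<le> h" "h \<le> 1" unfolding R_def u by auto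
      have habs: "\<bar>h\<bar> \<le> 1" using h q by auto
      have uD: "u \<in> Dom" unfolding u Dom_def using x ph s h d2 q by auto
      have f1: "f0d \<delta> \<phi> = 1" using ph by (simp add: f0d_def)
      have K: "0 \<le> Kops (UU (f0d \<delta>)) t \<phi> s h"
        using s by (intro Kops_nonneg UU_nonneg[OF g])
      have FF: "Efun (s + t) h \<le> FF (f0d \<delta>) t x \<phi> s h" unfolding FF_def f1 using K by simp
      have sig: "1 \<le> s + t" using s t by simp
      have "1 / (16 * (s + t)) \<ge> 1 / (32 * t)" using s t by (intro divide_left_mono) auto
      then have hs: "1 - 1 / (16 * (s + t)) \<le> h" using h by linarith
      have "1 / (240 * (s + t)) \<le> Efun (s + t) h" by (rule Efun_lower[OF sig hs h(2)])
      moreover have "1 / (480 * t) \<le> 1 / (240 * (s + t))" using s t by (intro divide_left_mono) auto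
      ultimately have E1: "1 / (480 * t) \<le> Efun (s + t) h" by linarith
      have "m * Efun s h \<le> m * 32" using Efun_bounds(3)[OF s(1) habs] m0 by (intro mult_left_mono)
      then have E2: "m * Efun s h \<le> 1 / (3000 * t)" using m32 by linarith
      have cc: "c \<le> 1 / (480 * t) - 1 / (3000 * t)" unfolding c_def using t by (simp add: field_simps)
      have diff: "c \<le> FF (f0d \<delta>) t x \<phi> s h - m * Efun s h" using FF E1 E2 cc by linarith
      then have "c^2 \<le> (FF (f0d \<delta>) t x \<phi> s h - m * Efun s h)^2" using c0 by (intro power_mono) auto
      then show ?thesis using True uD u by (simp add: ennreal_leI)
    qed simp
  qed
  have "ennreal (c^2) * emeasure lborel R = (\<integral>\<^sup>+ u. ennreal (c^2) * indicator R u \<partial>lborel)"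
    using Rs by (simp add: nn_integral_cmult_indicator)
  also have "\<dots> \<le> L2sq (\<lambda>x \<phi> s h. FF (f0d \<delta>) t x \<phi> s h - m * Efun s h)"
    unfolding L2sq_def by (rule nn_integral_mono) (rule pt)
  finally have X: "ennreal (c^2) * ennreal (\<delta> / 32) \<le> L2sq (\<lambda>x \<phi> s h. FF (f0d \<delta>) t x \<phi> s h - m * Efun s h)"
    unfolding Rm .
  have Y: "ennreal (c^2 * (\<delta> / 32)) = ennreal (c^2) * ennreal (\<delta> / 32)"
    by (rule ennreal_mult) (use d0 in auto)
  have Z: "ennreal (c^2 * (\<delta> / 32)) \<le> L2sq (\<lambda>x \<phi> s h. FF (f0d \<delta>) t x \<phi> s h - m * Efun s h)"
    using X unfolding Y .
  show ?thesis using Z unfolding c_def m_def .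
qed



lemma powr_sq: assumes t: "0 < (t::real)" shows "(t powr (-3/2))^2 = 1 / t^3"
proof -
  have a: "t powr (-3/2) * t powr (-3/2) = t powr (-3/2 + -3/2)" by (rule powr_add[symmetric])
  have b: "(-3/2 + -3/2 :: real) = - 3" by simp
  have c: "t powr (- 3) = inverse (t powr 3)" by (rule powr_minus)
  have d: "t powr 3 = t ^ 3" by (rule powr_numeral) (use t in simp)
  show ?thesis unfolding power2_eq_square a b c d by (simp add: divide_inverse)
qed

theorem theorem3p5:
  shows "\<not> (\<exists>\<Phi> :: real \<Rightarrow> real.
            \<Phi> \<in> o[at_top](\<lambda>t. t powr (-3/2))
          \<and> (\<forall>f F. L2_data f \<longrightarrow> is_solution f F \<longrightarrow>
               (\<forall>t\<ge>0. L2sq (\<lambda>x \<phi> s h. F t x \<phi> s h - mean f * Efun s h)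
                        \<le> ennreal ((\<Phi> t)^2) * L2sq (F 0))))"
proof
  assume "\<exists>\<Phi> :: real \<Rightarrow> real.
            \<Phi> \<in> o[at_top](\<lambda>t. t powr (-3/2))
          \<and> (\<forall>f F. L2_data f \<longrightarrow> is_solution f F \<longrightarrow>
               (\<forall>t\<ge>0. L2sq (\<lambda>x \<phi> s h. F t x \<phi> s h - mean f * Efun s h)
                        \<le> ennreal ((\<Phi> t)^2) * L2sq (F 0)))"
  then obtain \<Phi> :: "real \<Rightarrow> real" where o: "\<Phi> \<in> o[at_top](\<lambda>t. t powr (-3/2))"
    and H: "\<And>f F t. L2_data f \<Longrightarrow> is_solution f F \<Longrightarrow> 0 \<le> t \<Longrightarrow>
         L2sq (\<lambda>x \<phi> s h. F t x \<phi> s h - mean f * Efun s h) \<le> ennreal ((\<Phi> t)^2) * L2sq (F 0)"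
    by blast
  have "eventually (\<lambda>x. norm (\<Phi> x) \<le> 1 * norm (x powr (-3/2))) at_top"
    by (rule landau_o.smallD[OF o]) simp
  then obtain N where N: "\<And>x. N \<le> x \<Longrightarrow> \<bar>\<Phi> x\<bar> \<le> \<bar>x powr (-3/2)\<bar>"
    by (auto simp: eventually_at_top_linorder)
  define t :: real where "t = max N (10^12)"
  have t1: "10^12 \<le> t" unfolding t_def by simp
  then have t0: "0 < t" by simp
  have Pt: "\<bar>\<Phi> t\<bar> \<le> t powr (-3/2)" using N[of t] unfolding t_def by simp
  have P2: "(\<Phi> t)^2 \<le> 1 / t^3"
  proof -
    have "(\<Phi> t)^2 = \<bar>\<Phi> t\<bar>^2" by simp
    also have "\<dots> \<le> (t powr (-3/2))^2" using Pt by (intro power_mono) auto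
    also have "\<dots> = 1 / t^3" by (rule powr_sq[OF t0])
    finally show ?thesis .
  qed
  define \<delta> where "\<delta> = 1 / (16000 * t)"
  have d0: "0 < \<delta>" unfolding \<delta>_def using t0 by simp
  have d2: "\<delta> \<le> 2 * pi"
  proof -
    have "\<delta> \<le> 1" unfolding \<delta>_def using t1 by (auto simp: divide_le_eq)
    then show ?thesis using pi_gt3 by linarith
  qed
  have sol: "is_solution (\<lambda>x \<phi>. f0d \<delta> \<phi>) (FF (f0d \<delta>))" by (rule FF_solution[OF good_f0d])
  have ineq: "L2sq (\<lambda>x \<phi> s h. FF (f0d \<delta>) t x \<phi> s h - mean (\<lambda>x \<phi>. f0d \<delta> \<phi>) * Efun s h)
      \<le> ennreal ((\<Phi> t)^2) * L2sq (FF (f0d \<delta>) 0)"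
    by (rule H[OF L2_f0d sol]) (use t0 in simp)
  have "ennreal ((1 / (960 * t))^2 * (\<delta> / 32))
     \<le> L2sq (\<lambda>x \<phi> s h. FF (f0d \<delta>) t x \<phi> s h - mean (\<lambda>x \<phi>. f0d \<delta> \<phi>) * Efun s h)"
    by (rule LHS_bound) (use t1 \<delta>_def in auto)
  also note ineq
  also have "ennreal ((\<Phi> t)^2) * L2sq (FF (f0d \<delta>) 0) \<le> ennreal ((\<Phi> t)^2) * ennreal (4096 * \<delta>)"
    by (intro mult_left_mono F0_bound d0 d2) simp
  also have "\<dots> = ennreal ((\<Phi> t)^2 * (4096 * \<delta>))"
    by (rule ennreal_mult[symmetric]) (use d0 in auto)
  finally have A: "(1 / (960 * t))^2 * (\<delta> / 32) \<le> (\<Phi> t)^2 * (4096 * \<delta>)"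
    using d0 by (subst (asm) ennreal_le_iff) auto
  also have "\<dots> \<le> (1 / t^3) * (4096 * \<delta>)" using P2 d0 by (intro mult_right_mono) auto
  finally have B: "(1 / (960 * t))^2 * (\<delta> / 32) \<le> (1 / t^3) * (4096 * \<delta>)" .
  have "(1 / (960 * t))^2 * (\<delta> / 32) = \<delta> / (29491200 * t^2)" by (simp add: power2_eq_square field_simps)
  moreover have "(1 / t^3) * (4096 * \<delta>) = \<delta> * 4096 / t^3" by simp
  ultimately have "\<delta> / (29491200 * t^2) \<le> \<delta> * 4096 / t^3" using B by simp
  then have "\<delta> * t^3 \<le> \<delta> * 4096 * (29491200 * t^2)" using t0 by (simp add: field_simps)
  then have "t^3 \<le> 4096 * 29491200 * t^2" using d0 by (simp add: algebra_simps)
  then have "t * t^2 \<le> 120795955200 * t^2" by (simp add: power3_eq_cube power2_eq_square algebra_simps)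
  then have "t \<le> 120795955200" using t0 by simp
  then show False using t1 by simp
qed


end
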